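(* Let $\lambda>0$ and $0<\nu_n\le1$ for $n\ge1$, and let $p_*^{\nu_n}(n,t)$ be the solution of $$\partial_t^{\nu_n} p_*^{\nu_n}(n,t)=-\lambda n\,p_*^{\nu_n}(n,t)+\lambda (n-1)\,p_*^{\nu_{n-1}}(n-1,t),\qquad n\geq 1,$$ with $p_*^{\nu_0}(0,t)=0$, $p_*^{\nu_1}(1,0)=1$ and $p_*^{\nu_n}(n,0)=0$ for $n\ge2$ (the state dependent linear birth process, i.e. the state dependent fractional pure birth process with $\lambda_n=\lambda n$). Then $$p^{\nu_n}_*(n,t)=\frac{(-1)^{n-1}}{n}\sum_{k=n-1}^{\infty}(-\lambda)^k\sum_{\Lambda^k_n}\frac{t^{\sum_{j=1}^nk_j\nu_j}\prod_{j=1}^nj^{k_j}}{\Gamma\big(1+\sum_{j=1}^nk_j\nu_j\big)},\qquad n\geq1,$$ where $\Lambda^k_n=\{(k_1,\ldots,k_n):\ \sum_{j=1}^nk_j=k,\ k_1\in\mathbb{N}_0,\ k_j\in\mathbb{N}_0\setminus\{0\} \text{ for } 2\leq j\leq n\}$.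
   Context: $\mathbb{N}_0$ denotes the set of nonnegative integers. For $0<\nu<1$, $\partial_t^{\nu}f(t)=\frac{1}{\Gamma(1-\nu)}\int_0^t (t-s)^{-\nu}f'(s)\,\mathrm{d}s$ is the Caputo derivative, and $\partial_t^{1}f=f'$. *)

theory Defs
  imports "HOL-Analysis.Analysis"
begin

definition caputo :: "real \<Rightarrow> (real \<Rightarrow> real) \<Rightarrow> real \<Rightarrow> real" where
  "caputo nu f t =
     (if nu = 1 then deriv f t
      else (1 / Gamma (1 - nu)) * integral {0..t} (\<lambda>s. (t - s) powr (- nu) * deriv f s))"

definition caputo_regular :: "real \<Rightarrow> (real \<Rightarrow> real) \<Rightarrow> bool" where
  "caputo_regular nu f \<longleftrightarrow>
     continuous_on {0..} f \<and>
     (\<forall>t>0. f differentiable (at t)) \<and>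
     (nu < 1 \<longrightarrow> (\<forall>t>0. (\<lambda>s. (t - s) powr (- nu) * deriv f s) absolutely_integrable_on {0..t}))"

text \<open>Lambda^k_n: tuples (k_1,...,k_n), encoded as a list ks of length n with k_j = ks!(j-1),
  summing to k, with k_j >= 1 for 2 <= j <= n.\<close>
definition Lambda_set :: "nat \<Rightarrow> nat \<Rightarrow> nat list set" where
  "Lambda_set n k = {ks. length ks = n \<and> sum_list ks = k \<and> (\<forall>j\<in>{2..n}. ks ! (j - 1) \<ge> 1)}"

end

theory Submission
  imports Defs
begin

lemma kernel_has_integral:
  fixes nu a t :: real
  assumes nu: "nu > 0" and at: "a \<le> t"
  shows "((\<lambda>s. (t - s) powr (nu - 1)) has_integral (t - a) powr nu / nu) {a..t}"
proof -
  define F where "F = (\<lambda>s. - ((t - s) powr nu) / nu)"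
  have "((\<lambda>s. (t - s) powr (nu - 1)) has_integral (F t - F a)) {a..t}"
  proof (rule fundamental_theorem_of_calculus_interior[OF at])
    show "continuous_on {a..t} F" unfolding F_def
      using nu by (intro continuous_intros continuous_on_powr') auto
    fix s assume s: "s \<in> {a<..<t}"
    have "(F has_real_derivative (- (nu * (t - s) powr (nu - 1) * (0 - 1)) / nu)) (at s)"
      unfolding F_def using s nu by (intro derivative_eq_intros) auto
    then show "(F has_vector_derivative (t - s) powr (nu - 1)) (at s)"
      using nu by (simp add: has_real_derivative_iff_has_vector_derivative[symmetric])
  qed
  then show ?thesis using nu by (simp add: F_def)
qed

lemma beta_affine_has_integral:
  fixes a b u t :: real
  assumes a: "a > 0" and b: "b > 0" and ut: "u < t"
  shows "((\<lambda>s. (s - u) powr (a - 1) * (t - s) powr (b - 1)) has_integral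
            (t - u) powr (a + b - 1) * Beta a b) {u..t}"
proof -
  define m where "m = 1 / (t - u)"
  define c where "c = - u / (t - u)"
  have m: "m > 0" using ut by (simp add: m_def)
  have B: "((\<lambda>x. x powr (a - 1) * (1 - x) powr (b - 1)) has_integral Beta a b) (cbox 0 1)"
    using has_integral_Beta_real[OF a b] by simp
  from has_integral_affinity'[OF B m, of c]
  have 1: "((\<lambda>x. (m * x + c) powr (a - 1) * (1 - (m * x + c)) powr (b - 1)) has_integral Beta a b / m)
        {(0 - c) / m..(1 - c) / m}" by (simp add: divide_inverse mult.commute)
  have tu: "t - u > 0" using ut by simp
  have e1: "(0 - c) / m = u" "(1 - c) / m = t"
  proof -
    show "(0 - c) / m = u" using tu by (simp add: m_def c_def)
    have "t / (t - u) = (t - u) / (t - u) + u / (t - u)" by (metis add_divide_distrib diff_add_cancel)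
    then have "1 - c = t / (t - u)" using tu by (simp add: c_def)
    then show "(1 - c) / m = t" using tu by (simp add: m_def)
  qed
  have e2: "(m * x + c) powr (a - 1) * (1 - (m * x + c)) powr (b - 1) =
      (t - u) powr (2 - a - b) * ((x - u) powr (a - 1) * (t - x) powr (b - 1))" if x: "x \<in> {u..t}" for x
  proof -
    have "m * x + c = (x - u) / (t - u)" using tu by (simp add: m_def c_def diff_divide_distrib)
    moreover have "1 - (m * x + c) = (t - x) / (t - u)" unfolding calculation
    proof -
      have "(t - x) / (t - u) = (t - u) / (t - u) - (x - u) / (t - u)" 
        using diff_divide_distrib[of "t - u" "x - u" "t - u"] by simp
      then show "1 - (x - u) / (t - u) = (t - x) / (t - u)" using tu by simp
    qed
    moreover have "(x - u) / (t - u) \<ge> 0" "(t - x) / (t - u) \<ge> 0" using x ut by auto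
    moreover have "(t - u) powr (2 - a - b) = 1 / ((t - u) powr (a - 1) * (t - u) powr (b - 1))"
    proof -
      have "(t - u) powr (a - 1) * (t - u) powr (b - 1) = (t - u) powr (a + b - 2)"
        by (simp add: powr_add[symmetric])
      moreover have "(t - u) powr (2 - a - b) = (t - u) powr (- (a + b - 2))" by (simp add: algebra_simps)
      ultimately show ?thesis by (metis powr_minus_divide)
    qed
    ultimately show ?thesis using x ut
      by (simp add: powr_divide)
  qed
  have 2: "((\<lambda>x. (t - u) powr (2 - a - b) * ((x - u) powr (a - 1) * (t - x) powr (b - 1))) has_integral Beta a b / m) {u..t}"
    using 1 e2 unfolding e1 by (rule has_integral_eq[rotated])
  have 3: "((\<lambda>x. (t - u) powr (a + b - 2) * ((t - u) powr (2 - a - b) * ((x - u) powr (a - 1) * (t - x) powr (b - 1))))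
      has_integral (t - u) powr (a + b - 2) * (Beta a b / m)) {u..t}"
    by (rule has_integral_mult_right[OF 2])
  have e3: "(t - u) powr (a + b - 2) * ((t - u) powr (2 - a - b) * y) = y" for y
    using ut by (simp add: powr_add[symmetric] mult.assoc[symmetric])
  have e4: "(t - u) powr (a + b - 2) * (Beta a b / m) = (t - u) powr (a + b - 1) * Beta a b"
    using tu by (simp add: m_def powr_add[symmetric] powr_diff power2_eq_square)
  show ?thesis using 3 unfolding e3 e4 .
qed

definition Ifr :: "real \<Rightarrow> (real \<Rightarrow> real) \<Rightarrow> real \<Rightarrow> real" where
  "Ifr nu g t = integral {0..t} (\<lambda>s. (t - s) powr (nu - 1) * g s) / Gamma nu"

definition phi :: "real \<Rightarrow> real \<Rightarrow> real" where
  "phi a t = (if a = 0 then 1 else t powr a / Gamma (1 + a))"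

lemma kernel_abs_int:
  fixes nu a t :: real
  assumes nu: "nu > 0" and at: "a \<le> t"
  shows "(\<lambda>s. (t - s) powr (nu - 1)) absolutely_integrable_on {a..t}"
  using kernel_has_integral[OF nu at] by (intro nonnegative_absolutely_integrable_1) auto

lemma kernel_prod_abs_int:
  fixes nu a t :: real and g :: "real \<Rightarrow> real"
  assumes nu: "nu > 0" and at: "a \<le> t" and g: "continuous_on {a..t} g"
  shows "(\<lambda>s. (t - s) powr (nu - 1) * g s) absolutely_integrable_on {a..t}"
proof -
  have "(\<lambda>s. g s * (t - s) powr (nu - 1)) absolutely_integrable_on {a..t}"
  proof (rule absolutely_integrable_bounded_measurable_product_real)
    show "g \<in> borel_measurable (lebesgue_on {a..t})"
      using g by (intro continuous_imp_measurable_on_sets_lebesgue) auto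
    show "bounded (g ` {a..t})" using g compact_continuous_image compact_imp_bounded by blast
  qed (use kernel_abs_int[OF nu at] in auto)
  then show ?thesis by (simp add: mult.commute)
qed

lemma kernel_prod_int:
  fixes nu a t :: real and g :: "real \<Rightarrow> real"
  assumes nu: "nu > 0" and at: "a \<le> t" and g: "continuous_on {a..t} g"
  shows "(\<lambda>s. (t - s) powr (nu - 1) * g s) integrable_on {a..t}"
  using kernel_prod_abs_int[OF assms] set_lebesgue_integral_eq_integral(1) by blast

lemma Ifr_phi:
  fixes nu a t :: real
  assumes nu: "nu > 0" and a: "a \<ge> 0" and t: "t \<ge> 0"
  shows "Ifr nu (phi a) t = phi (a + nu) t"
proof (cases "t = 0")
  case True
  then show ?thesis using nu a by (simp add: Ifr_def phi_def)
next
  case False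
  then have t: "t > 0" using t by simp
  show ?thesis
  proof (cases "a = 0")
    case True
    have "((\<lambda>s. (t - s) powr (nu - 1) * phi a s) has_integral t powr nu / nu) {0..t}"
      using kernel_has_integral[OF nu, of 0 t] t True by (simp add: phi_def)
    then have "Ifr nu (phi a) t = t powr nu / nu / Gamma nu"
      by (simp add: Ifr_def integral_unique)
    also have "\<dots> = t powr nu / Gamma (1 + nu)"
    proof -
      have "nu \<notin> \<int>\<^sub>\<le>\<^sub>0" using nu by (auto elim!: nonpos_Ints_cases)
      then show ?thesis using nu Gamma_plus1[of nu] by (simp add: add.commute)
    qed
    finally show ?thesis using True nu by (simp add: phi_def)
  next
    case False
    then have a: "a > 0" using a by simp
    have "((\<lambda>s. (s - 0) powr (a + 1 - 1) * (t - s) powr (nu - 1)) has_integral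
            (t - 0) powr (a + 1 + nu - 1) * Beta (a + 1) nu) {0..t}"
      by (rule beta_affine_has_integral) (use a nu t in auto)
    then have "((\<lambda>s. (t - s) powr (nu - 1) * phi a s) has_integral
            t powr (a + nu) * Beta (a + 1) nu / Gamma (1 + a)) {0..t}"
      using a by (auto simp: phi_def mult.commute intro: has_integral_divide)
    then have "Ifr nu (phi a) t = t powr (a + nu) * Beta (a + 1) nu / Gamma (1 + a) / Gamma nu"
      by (simp add: Ifr_def integral_unique)
    also have "\<dots> = t powr (a + nu) / Gamma (1 + (a + nu))"
    proof -
      have "Gamma (1 + a) > 0" "Gamma nu > 0" using a nu by auto
      then show ?thesis
        by (simp add: Beta_altdef rGamma_inverse_Gamma add.commute add.left_commute field_simps)
    qed
    finally show ?thesis using a nu by (simp add: phi_def)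
  qed
qed

lemma volterra_unique:
  fixes nu C :: real and d :: "real \<Rightarrow> real"
  assumes nu: "nu > 0" and d: "\<And>R. R \<ge> 0 \<Longrightarrow> continuous_on {0..R} d"
    and eq: "\<And>t. t \<ge> 0 \<Longrightarrow> d t = C * integral {0..t} (\<lambda>s. (t - s) powr (nu - 1) * d s)"
    and t: "t \<ge> 0"
  shows "d t = 0"
proof -
  define A where "A = \<bar>C\<bar> + 1"
  have A: "A > 0" by (simp add: A_def)
  define h where "h = (nu / (2 * A)) powr (1 / nu)"
  have h: "h > 0" using A nu by (simp add: h_def)
  have hnu: "h powr nu = nu / (2 * A)"
    using A nu by (simp add: h_def powr_powr)
  have step: "\<forall>s\<in>{0..real m * h}. d s = 0" for m :: nat
  proof (induction m)
    case 0
    have "d 0 = 0" using eq[of 0] by simp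
    then show ?case by auto
  next
    case (Suc m)
    define a where "a = real m * h"
    define b where "b = real (Suc m) * h"
    have ab: "0 \<le> a" "a \<le> b" "b - a = h" using h by (auto simp: a_def b_def algebra_simps)
    have dab: "continuous_on {a..b} d" using ab by (intro continuous_on_subset[OF d[of b]]) auto
    have "continuous_on {a..b} (\<lambda>s. \<bar>d s\<bar>)" using dab by (intro continuous_intros)
    then obtain sm where sm: "sm \<in> {a..b}" and smax: "\<And>s. s \<in> {a..b} \<Longrightarrow> \<bar>d s\<bar> \<le> \<bar>d sm\<bar>"
      using continuous_attains_sup[of "{a..b}" "\<lambda>s. \<bar>d s\<bar>"] ab by auto
    define M where "M = \<bar>d sm\<bar>"
    have bound: "\<bar>d t\<bar> \<le> M / 2" if tab: "t \<in> {a..b}" for t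
    proof -
      have t0: "t \<ge> 0" "a \<le> t" "t \<le> b" using tab ab by auto
      have dcont: "continuous_on {0..t} d" using t0 by (intro continuous_on_subset[OF d[of t]]) auto
      have int: "(\<lambda>s. (t - s) powr (nu - 1) * d s) integrable_on {0..t}"
        by (rule kernel_prod_int[OF nu _ dcont]) (use t0 in auto)
      have split: "integral {0..a} (\<lambda>s. (t - s) powr (nu - 1) * d s) + integral {a..t} (\<lambda>s. (t - s) powr (nu - 1) * d s)
          = integral {0..t} (\<lambda>s. (t - s) powr (nu - 1) * d s)"
        using Henstock_Kurzweil_Integration.integral_combine[OF _ _ int, of a] t0 ab by auto
      have z: "integral {0..a} (\<lambda>s. (t - s) powr (nu - 1) * d s) = 0"
      proof -
        have "integral {0..a} (\<lambda>s. (t - s) powr (nu - 1) * d s) = integral {0..a} (\<lambda>s. 0)"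
          by (rule integral_cong) (use Suc.IH in \<open>auto simp: a_def\<close>)
        then show ?thesis by simp
      qed
      have intat: "(\<lambda>s. (t - s) powr (nu - 1) * d s) integrable_on {a..t}"
        by (rule integrable_on_subinterval[OF int]) (use ab in auto)
      have kint: "((\<lambda>s. (t - s) powr (nu - 1) * M) has_integral (t - a) powr nu / nu * M) {a..t}"
        using has_integral_mult_left[OF kernel_has_integral[OF nu t0(2)]] .
      have "norm (integral {a..t} (\<lambda>s. (t - s) powr (nu - 1) * d s)) \<le> integral {a..t} (\<lambda>s. (t - s) powr (nu - 1) * M)"
      proof (rule integral_norm_bound_integral[OF intat])
        show "(\<lambda>s. (t - s) powr (nu - 1) * M) integrable_on {a..t}" using kint by blast
        fix s assume s: "s \<in> {a..t}"
        have "\<bar>d s\<bar> \<le> M" unfolding M_def by (rule smax) (use s t0 in auto)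
        then show "norm ((t - s) powr (nu - 1) * d s) \<le> (t - s) powr (nu - 1) * M"
          by (simp add: abs_mult mult_left_mono)
      qed
      also have "\<dots> = (t - a) powr nu / nu * M" using kint by (rule integral_unique)
      also have "\<dots> \<le> h powr nu / nu * M"
        using t0 ab nu by (intro mult_right_mono divide_right_mono powr_mono2) (auto simp: M_def)
      finally have I: "\<bar>integral {0..t} (\<lambda>s. (t - s) powr (nu - 1) * d s)\<bar> \<le> h powr nu / nu * M"
        using split z by simp
      have "\<bar>d t\<bar> = \<bar>C\<bar> * \<bar>integral {0..t} (\<lambda>s. (t - s) powr (nu - 1) * d s)\<bar>"
        using eq[OF t0(1)] by (simp add: abs_mult)
      also have "\<dots> \<le> A * (h powr nu / nu * M)"
        by (intro mult_mono I) (auto simp: A_def M_def intro: order.trans[OF _ I])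
      also have "\<dots> = M / 2" using A nu by (simp add: hnu)
      finally show ?thesis .
    qed
    have "M \<le> M / 2" using bound[OF sm] by (simp add: M_def)
    then have M0: "M \<le> 0" by simp
    show ?case
    proof
      fix s assume s: "s \<in> {0..real (Suc m) * h}"
      show "d s = 0"
      proof (cases "s \<le> a")
        case True then show ?thesis using Suc.IH s by (auto simp: a_def)
      next
        case False
        then have "s \<in> {a..b}" using s by (auto simp: b_def)
        then show ?thesis using smax[of s] M0 by (simp add: M_def)
      qed
    qed
  qed
  define m where "m = nat \<lceil>t / h\<rceil>"
  have "t / h \<le> real m" unfolding m_def by linarith
  then have "t \<le> real m * h" using h by (simp add: divide_le_eq)
  then show ?thesis using step[of m] t by auto
qed

lemma deriv_measurable:
  fixes f :: "real \<Rightarrow> real"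
  assumes fcont: "continuous_on {0..} f" and fdiff: "\<And>t. t > 0 \<Longrightarrow> f differentiable (at t)"
  shows "(\<lambda>s. if 0 < s then deriv f s else deriv f 0) \<in> borel_measurable borel"
proof -
  define F0 where "F0 = (\<lambda>s::real. if s \<in> {0..} then f s else 0)"
  have F0m[measurable]: "F0 \<in> borel_measurable borel"
    unfolding F0_def by (rule borel_measurable_continuous_on_if) (auto intro: fcont)
  define A where "A = (\<lambda>(n::nat) s. if 0 < s then (F0 (s + 1 / real (Suc n)) - F0 s) * real (Suc n) else deriv f 0)"
  show ?thesis
  proof (rule borel_measurable_LIMSEQ_real[where u = A])
    show "A i \<in> borel_measurable borel" for i unfolding A_def by measurable
    fix s :: real
    show "(\<lambda>i. A i s) \<longlonglongrightarrow> (if 0 < s then deriv f s else deriv f 0)"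
    proof (cases "0 < s")
      case False then show ?thesis by (simp add: A_def)
    next
      case True
      have "(f has_real_derivative deriv f s) (at s)"
        using fdiff[OF True] by (simp add: DERIV_deriv_iff_real_differentiable)
      then have lim: "((\<lambda>y. (f y - f s) / (y - s)) \<longlongrightarrow> deriv f s) (at s)"
        by (simp add: has_field_derivative_iff)
      have seq: "filterlim (\<lambda>n. s + 1 / real (Suc n)) (at s) sequentially"
      proof (subst filterlim_at, intro conjI)
        show "\<forall>\<^sub>F n in sequentially. s + 1 / real (Suc n) \<in> UNIV \<and> s + 1 / real (Suc n) \<noteq> s" by simp
        have "(\<lambda>n. s + 1 / real (Suc n)) \<longlonglongrightarrow> s + 0"
          by (intro tendsto_intros LIMSEQ_Suc[OF lim_const_over_n])
        then show "(\<lambda>n. s + 1 / real (Suc n)) \<longlonglongrightarrow> s" by simp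
      qed
      have "(\<lambda>n. (f (s + 1 / real (Suc n)) - f s) / (s + 1 / real (Suc n) - s)) \<longlonglongrightarrow> deriv f s"
        using filterlim_compose[OF lim seq] by simp
      moreover have "(f (s + 1 / real (Suc n)) - f s) / (s + 1 / real (Suc n) - s) = A n s" for n
        using True by (simp add: A_def F0_def)
      ultimately show ?thesis using True by simp
    qed
  qed
qed

lemma bridge_lborel:
  fixes f :: "real \<Rightarrow> real" and S :: "real set"
  assumes m: "(\<lambda>x. if x \<in> S then f x else 0) \<in> borel_measurable borel"
    and ai: "f absolutely_integrable_on S"
  shows "integrable lborel (\<lambda>x. if x \<in> S then f x else 0)"
    "integral\<^sup>L lborel (\<lambda>x. if x \<in> S then f x else 0) = integral S f"
proof -
  have e: "(\<lambda>x. indicator S x *\<^sub>R f x) = (\<lambda>x. if x \<in> S then f x else 0)"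
    by (auto simp: indicator_def)
  have m': "(\<lambda>x. if x \<in> S then f x else 0) \<in> borel_measurable lborel" using m by simp
  have "integrable lebesgue (\<lambda>x. if x \<in> S then f x else 0)"
    using ai unfolding set_integrable_def e .
  then show I: "integrable lborel (\<lambda>x. if x \<in> S then f x else 0)"
    using integrable_completion[OF m'] by simp
  have "integral\<^sup>L lborel (\<lambda>x. if x \<in> S then f x else 0) = integral\<^sup>L lebesgue (\<lambda>x. if x \<in> S then f x else 0)"
    using integral_completion[OF m'] by simp
  also have "\<dots> = set_lebesgue_integral lebesgue S f"
    unfolding set_lebesgue_integral_def e ..
  also have "\<dots> = integral S f" by (rule set_lebesgue_integral_eq_integral(2)[OF ai])
  finally show "integral\<^sup>L lborel (\<lambda>x. if x \<in> S then f x else 0) = integral S f" .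
qed

lemma bridge_lborel_nonneg:
  fixes f :: "real \<Rightarrow> real" and S :: "real set"
  assumes m: "(\<lambda>x. if x \<in> S then f x else 0) \<in> borel_measurable borel"
    and nn: "\<And>x. x \<in> S \<Longrightarrow> f x \<ge> 0"
    and hi: "(f has_integral I) S"
  shows "integrable lborel (\<lambda>x. if x \<in> S then f x else 0)"
    "integral\<^sup>L lborel (\<lambda>x. if x \<in> S then f x else 0) = I"
proof -
  have ai: "f absolutely_integrable_on S"
    using hi nn by (intro nonnegative_absolutely_integrable_1) auto
  show "integrable lborel (\<lambda>x. if x \<in> S then f x else 0)"
    using bridge_lborel[OF m ai] by simp
  show "integral\<^sup>L lborel (\<lambda>x. if x \<in> S then f x else 0) = I"
    using bridge_lborel(2)[OF m ai] hi by (simp add: integral_unique)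
qed

lemma abs_int_cong:
  fixes f g :: "real \<Rightarrow> real"
  assumes "f absolutely_integrable_on S" "\<And>x. x \<in> S \<Longrightarrow> f x = g x"
  shows "g absolutely_integrable_on S"
proof -
  have "(\<lambda>x. indicator S x *\<^sub>R f x) = (\<lambda>x. indicator S x *\<^sub>R g x)"
    using assms(2) by (auto simp: indicator_def)
  then show ?thesis using assms(1) unfolding set_integrable_def by simp
qed

lemma lborel_to_HK:
  fixes f :: "real \<Rightarrow> real"
  assumes "integrable lborel (\<lambda>x. if x \<in> S then f x else 0)"
  shows "(f has_integral integral\<^sup>L lborel (\<lambda>x. if x \<in> S then f x else 0)) S"
  using has_integral_integral_lborel[OF assms] by (simp add: has_integral_restrict_UNIV)

lemma caputo_volterra:
  fixes nu T :: real and f g :: "real \<Rightarrow> real"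
  assumes nu: "0 < nu" "nu < 1"
    and fcont: "continuous_on {0..} f"
    and fdiff: "\<And>t. t > 0 \<Longrightarrow> f differentiable (at t)"
    and fint: "\<And>t. t > 0 \<Longrightarrow> (\<lambda>s. (t - s) powr (- nu) * deriv f s) absolutely_integrable_on {0..t}"
    and gcont: "continuous_on {0..} g"
    and cap: "\<And>t. t > 0 \<Longrightarrow> integral {0..t} (\<lambda>s. (t - s) powr (- nu) * deriv f s) = Gamma (1 - nu) * g t"
    and T: "T > 0"
  shows "integral {0..T} (\<lambda>s. (T - s) powr (nu - 1) * g s) = Gamma nu * (f T - f 0)"
proof -
  define D where "D = (\<lambda>s. if 0 < s then deriv f s else deriv f 0)"
  have Dm[measurable]: "D \<in> borel_measurable borel"
    unfolding D_def by (rule deriv_measurable[OF fcont fdiff])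
  have DD: "D s = deriv f s" if "s \<ge> 0" for s using that by (cases "s = 0") (auto simp: D_def)
  define B where "B = Beta (1 - nu) nu"
  define ker where "ker = (\<lambda>u s. (T - s) powr (nu - 1) * (s - u) powr (- nu))"
  define Fc where "Fc = (\<lambda>u s. if 0 \<le> u \<and> u \<le> s \<and> s \<le> T then (T - s) powr (nu - 1) * ((s - u) powr (- nu) * D u) else 0)"
  have Fm[measurable]: "case_prod Fc \<in> borel_measurable (lborel \<Otimes>\<^sub>M lborel)"
    unfolding Fc_def by measurable
  have kerm[measurable]: "(\<lambda>s. if s \<in> {u..T} then ker u s else 0) \<in> borel_measurable borel" for u
    unfolding ker_def by measurable
  have kerI: "integrable lborel (\<lambda>s. if s \<in> {u..T} then ker u s else 0)"
    "integral\<^sup>L lborel (\<lambda>s. if s \<in> {u..T} then ker u s else 0) = B" if u: "0 \<le> u" "u < T" for u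
  proof -
    have "((\<lambda>s. (s - u) powr ((1 - nu) - 1) * (T - s) powr (nu - 1)) has_integral
            (T - u) powr ((1 - nu) + nu - 1) * Beta (1 - nu) nu) {u..T}"
      by (rule beta_affine_has_integral) (use nu u in auto)
    then have hi: "(ker u has_integral B) {u..T}" using u by (simp add: ker_def B_def mult.commute)
    show "integrable lborel (\<lambda>s. if s \<in> {u..T} then ker u s else 0)"
      by (rule bridge_lborel_nonneg(1)[OF kerm _ hi]) (simp add: ker_def)
    show "integral\<^sup>L lborel (\<lambda>s. if s \<in> {u..T} then ker u s else 0) = B"
      by (rule bridge_lborel_nonneg(2)[OF kerm _ hi]) (simp add: ker_def)
  qed
  have Fu: "Fc u s = (if 0 \<le> u \<and> u < T then D u * (if s \<in> {u..T} then ker u s else 0) else 0)" for u s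
    by (cases "u = T") (auto simp: Fc_def ker_def)
  have Fu_int: "integrable lborel (\<lambda>s. Fc u s)" for u
  proof (cases "0 \<le> u \<and> u < T")
    case True
    then show ?thesis unfolding Fu using integrable_mult_right[OF kerI(1)[of u], of "D u"] by simp
  next
    case False
    then have "(\<lambda>s. Fc u s) = (\<lambda>s. 0)" unfolding Fu by auto
    then show ?thesis by simp
  qed
  have Fu_val: "integral\<^sup>L lborel (\<lambda>s. Fc u s) = (if 0 \<le> u \<and> u < T then D u * B else 0)" for u
    unfolding Fu using kerI(2)[of u] by auto
  have Fu_norm: "integral\<^sup>L lborel (\<lambda>s. norm (Fc u s)) = (if 0 \<le> u \<and> u < T then \<bar>D u\<bar> * B else 0)" for u
  proof -
    have "(\<lambda>s. norm (Fc u s)) = (\<lambda>s. if 0 \<le> u \<and> u < T then \<bar>D u\<bar> * (if s \<in> {u..T} then ker u s else 0) else 0)"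
      unfolding Fu by (auto simp: ker_def abs_mult)
    then show ?thesis using kerI(2)[of u] by auto
  qed
  have fintT: "(\<lambda>s. T powr nu * ((T - s) powr (- nu) * D s)) absolutely_integrable_on {0..T}"
    using abs_int_cong[OF fint[OF T], of "\<lambda>s. (T - s) powr (- nu) * D s"] DD
    by (intro set_integrable_mult_right) auto
  have DI: "integrable lborel (\<lambda>u. if u \<in> {0..T} then D u else 0)"
  proof (rule Bochner_Integration.integrable_bound)
    show "integrable lborel (\<lambda>u. if u \<in> {0..T} then T powr nu * ((T - u) powr (- nu) * D u) else 0)"
      by (rule bridge_lborel(1)[OF _ fintT]) measurable
    show "(\<lambda>u. if u \<in> {0..T} then D u else 0) \<in> borel_measurable lborel" by measurable
    show "AE u in lborel. norm (if u \<in> {0..T} then D u else 0) \<le>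
            norm (if u \<in> {0..T} then T powr nu * ((T - u) powr (- nu) * D u) else 0)"
      using AE_lborel_singleton[of T]
    proof (rule AE_mp, intro AE_I2 impI)
      fix u :: real assume uT: "u \<noteq> T"
      show "norm (if u \<in> {0..T} then D u else 0) \<le>
            norm (if u \<in> {0..T} then T powr nu * ((T - u) powr (- nu) * D u) else 0)"
      proof (cases "u \<in> {0..T}")
        case True
        then have u: "0 \<le> u" "u < T" using uT by auto
        have "(T - u) powr nu \<le> T powr nu" using u nu by (intro powr_mono2) auto
        then have "T powr nu * (T - u) powr (- nu) \<ge> 1"
          using u by (simp add: powr_minus field_simps)
        then have "1 * \<bar>D u\<bar> \<le> (T powr nu * (T - u) powr (- nu)) * \<bar>D u\<bar>"
          by (intro mult_right_mono) auto
        then show ?thesis using True by (simp add: abs_mult mult.assoc)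
      next
        case False then show ?thesis by auto
      qed
    qed
  qed
  have DHK: "integral\<^sup>L lborel (\<lambda>u. if u \<in> {0..T} then D u else 0) = f T - f 0"
  proof -
    have h1: "(D has_integral integral\<^sup>L lborel (\<lambda>u. if u \<in> {0..T} then D u else 0)) {0..T}"
      by (rule lborel_to_HK[OF DI])
    have "(deriv f has_integral f T - f 0) {0..T}"
    proof (rule fundamental_theorem_of_calculus_interior)
      show "continuous_on {0..T} f" by (rule continuous_on_subset[OF fcont]) auto
      fix x assume x: "x \<in> {0<..<T}"
      then show "(f has_vector_derivative deriv f x) (at x)"
        using fdiff[of x] by (auto simp: DERIV_deriv_iff_real_differentiable has_real_derivative_iff_has_vector_derivative[symmetric])
    qed (use T in auto)
    then have "(D has_integral f T - f 0) {0..T}"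
      by (rule has_integral_eq[rotated]) (auto simp: DD)
    then show ?thesis using h1 by (rule has_integral_unique[symmetric])
  qed
  have integ1: "integrable lborel (\<lambda>u. integral\<^sup>L lborel (\<lambda>s. norm (Fc u s)))"
    unfolding Fu_norm
  proof (rule Bochner_Integration.integrable_bound)
    show "integrable lborel (\<lambda>u. \<bar>B\<bar> * norm (if u \<in> {0..T} then D u else 0))"
      using DI by (intro integrable_mult_right integrable_norm)
    show "(\<lambda>u. if 0 \<le> u \<and> u < T then \<bar>D u\<bar> * B else 0) \<in> borel_measurable lborel" by measurable
    show "AE u in lborel. norm (if 0 \<le> u \<and> u < T then \<bar>D u\<bar> * B else 0) \<le> norm (\<bar>B\<bar> * norm (if u \<in> {0..T} then D u else 0))"
      by (intro AE_I2) (auto simp: abs_mult)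
  qed
  have intprod: "integrable (lborel \<Otimes>\<^sub>M lborel) (case_prod Fc)"
    by (rule lborel_pair.Fubini_integrable[OF Fm]) (use integ1 Fu_int in auto)
  have fub: "(\<integral>s. (\<integral>u. Fc u s \<partial>lborel) \<partial>lborel) = (\<integral>u. (\<integral>s. Fc u s \<partial>lborel) \<partial>lborel)"
    by (rule lborel_pair.Fubini_integral[OF intprod])
  have rhs: "(\<integral>u. (\<integral>s. Fc u s \<partial>lborel) \<partial>lborel) = B * (f T - f 0)"
  proof -
    have "(\<integral>u. (\<integral>s. Fc u s \<partial>lborel) \<partial>lborel) = (\<integral>u. B * (if u \<in> {0..T} then D u else 0) \<partial>lborel)"
      unfolding Fu_val
    proof (rule integral_cong_AE)
      show "(\<lambda>u. if 0 \<le> u \<and> u < T then D u * B else 0) \<in> borel_measurable lborel" by measurable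
      show "(\<lambda>u. B * (if u \<in> {0..T} then D u else 0)) \<in> borel_measurable lborel" by measurable
      show "AE u in lborel. (if 0 \<le> u \<and> u < T then D u * B else 0) = B * (if u \<in> {0..T} then D u else 0)"
        using AE_lborel_singleton[of T] by eventually_elim auto
    qed
    also have "\<dots> = B * (f T - f 0)" using DHK by simp
    finally show ?thesis .
  qed
  have Gs: "(\<integral>u. Fc u s \<partial>lborel) = (if 0 < s \<and> s \<le> T then (T - s) powr (nu - 1) * (Gamma (1 - nu) * g s) else 0)" for s
  proof (cases "0 < s \<and> s \<le> T")
    case True
    then have s: "0 < s" "s \<le> T" by auto
    have e: "(\<lambda>u. Fc u s) = (\<lambda>u. if u \<in> {0..s} then (T - s) powr (nu - 1) * ((s - u) powr (- nu) * D u) else 0)"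
      using s by (auto simp: Fc_def)
    have ai0: "(\<lambda>u. (s - u) powr (- nu) * D u) absolutely_integrable_on {0..s}"
      using abs_int_cong[OF fint[OF s(1)], of "\<lambda>u. (s - u) powr (- nu) * D u"] DD by auto
    have ai: "(\<lambda>u. (T - s) powr (nu - 1) * ((s - u) powr (- nu) * D u)) absolutely_integrable_on {0..s}"
      using ai0 by (rule set_integrable_mult_right)
    have "(\<integral>u. Fc u s \<partial>lborel) = integral {0..s} (\<lambda>u. (T - s) powr (nu - 1) * ((s - u) powr (- nu) * D u))"
      unfolding e by (rule bridge_lborel(2)[OF _ ai]) measurable
    also have "\<dots> = (T - s) powr (nu - 1) * integral {0..s} (\<lambda>u. (s - u) powr (- nu) * D u)"
      by simp
    also have "integral {0..s} (\<lambda>u. (s - u) powr (- nu) * D u) = integral {0..s} (\<lambda>u. (s - u) powr (- nu) * deriv f u)"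
      by (rule integral_cong) (simp add: DD)
    also have "\<dots> = Gamma (1 - nu) * g s" by (rule cap[OF s(1)])
    finally show ?thesis using True by simp
  next
    case False
    have "(\<lambda>u. Fc u s) = (\<lambda>u. 0)"
    proof
      fix u show "Fc u s = 0"
        using False by (cases "u = 0") (auto simp: Fc_def)
    qed
    then show ?thesis using False by auto
  qed
  have gI: "(\<lambda>s. (T - s) powr (nu - 1) * g s) absolutely_integrable_on {0..T}"
    by (rule kernel_prod_abs_int) (use nu T in \<open>auto intro: continuous_on_subset[OF gcont]\<close>)
  have gcm: "(\<lambda>s. if s \<in> {0..T} then g s else 0) \<in> borel_measurable borel"
  proof -
    have "(\<lambda>s. if s \<in> {0..T} then g s else 0) \<in> borel_measurable borel"
      by (rule borel_measurable_continuous_on_if) (auto intro: continuous_on_subset[OF gcont])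
    then show ?thesis .
  qed
  have lhs: "(\<integral>s. (\<integral>u. Fc u s \<partial>lborel) \<partial>lborel) = Gamma (1 - nu) * integral {0..T} (\<lambda>s. (T - s) powr (nu - 1) * g s)"
  proof -
    have m1: "(\<lambda>s. if s \<in> {0..T} then (T - s) powr (nu - 1) * g s else 0) \<in> borel_measurable borel"
    proof -
      have "(\<lambda>s. (T - s) powr (nu - 1) * (if s \<in> {0..T} then g s else 0)) \<in> borel_measurable borel"
        using gcm by measurable
      moreover have "(\<lambda>s. (T - s) powr (nu - 1) * (if s \<in> {0..T} then g s else 0)) = (\<lambda>s. if s \<in> {0..T} then (T - s) powr (nu - 1) * g s else 0)"
        by auto
      ultimately show ?thesis by simp
    qed
    have "(\<integral>s. (\<integral>u. Fc u s \<partial>lborel) \<partial>lborel) = (\<integral>s. Gamma (1 - nu) * (if s \<in> {0..T} then (T - s) powr (nu - 1) * g s else 0) \<partial>lborel)"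
      unfolding Gs
    proof (rule integral_cong_AE)
      have "(\<lambda>s. (if 0 < s \<and> s \<le> T then 1 else 0) * (Gamma (1 - nu) * (if s \<in> {0..T} then (T - s) powr (nu - 1) * g s else 0))) \<in> borel_measurable lborel"
        using m1 by measurable
      moreover have "(\<lambda>s. (if 0 < s \<and> s \<le> T then 1 else 0) * (Gamma (1 - nu) * (if s \<in> {0..T} then (T - s) powr (nu - 1) * g s else 0)))
          = (\<lambda>s. if 0 < s \<and> s \<le> T then (T - s) powr (nu - 1) * (Gamma (1 - nu) * g s) else 0)"
        by auto
      ultimately show "(\<lambda>s. if 0 < s \<and> s \<le> T then (T - s) powr (nu - 1) * (Gamma (1 - nu) * g s) else 0) \<in> borel_measurable lborel"
        by simp
      show "(\<lambda>s. Gamma (1 - nu) * (if s \<in> {0..T} then (T - s) powr (nu - 1) * g s else 0)) \<in> borel_measurable lborel"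
        using m1 by measurable
      show "AE s in lborel. (if 0 < s \<and> s \<le> T then (T - s) powr (nu - 1) * (Gamma (1 - nu) * g s) else 0) =
          Gamma (1 - nu) * (if s \<in> {0..T} then (T - s) powr (nu - 1) * g s else 0)"
        using AE_lborel_singleton[of 0] by eventually_elim auto
    qed
    also have "\<dots> = Gamma (1 - nu) * integral {0..T} (\<lambda>s. (T - s) powr (nu - 1) * g s)"
      using bridge_lborel(2)[OF m1 gI] by simp
    finally show ?thesis .
  qed
  have Bv: "B = Gamma (1 - nu) * Gamma nu"
  proof -
    have "Gamma (1 - nu + nu) = 1" by simp
    then show ?thesis unfolding B_def Beta_altdef by (simp add: rGamma_inverse_Gamma)
  qed
  have G1: "Gamma (1 - nu) > 0" using nu by auto
  from fub lhs rhs Bv have "Gamma (1 - nu) * integral {0..T} (\<lambda>s. (T - s) powr (nu - 1) * g s) = Gamma (1 - nu) * (Gamma nu * (f T - f 0))"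
    by (simp add: mult.assoc)
  then show ?thesis using G1 by simp
qed

lemma Lambda_finite: "finite (Lambda_set n k)"
proof (rule finite_subset[OF _ finite_lists_length_eq[OF finite_atLeastAtMost[of 0 k], of n]])
  show "Lambda_set n k \<subseteq> {xs. set xs \<subseteq> {0..k} \<and> length xs = n}"
    by (auto simp: Lambda_set_def intro: member_le_sum_list)
qed

lemma Lambda_card: "card (Lambda_set n k) \<le> (k + 1) ^ n"
proof -
  have "card (Lambda_set n k) \<le> card {xs. set xs \<subseteq> {0..k} \<and> length xs = n}"
    by (rule card_mono[OF finite_lists_length_eq[OF finite_atLeastAtMost]])
       (auto simp: Lambda_set_def intro: member_le_sum_list)
  also have "\<dots> = (k + 1) ^ n" by (simp add: card_lists_length_eq)
  finally show ?thesis .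
qed

lemma Lambda_snoc:
  "(xs @ [a]) \<in> Lambda_set (Suc m) K \<longleftrightarrow>
     xs \<in> Lambda_set m (K - a) \<and> a \<le> K \<and> (m \<ge> 1 \<longrightarrow> a \<ge> 1)"
proof
  assume A: "xs @ [a] \<in> Lambda_set (Suc m) K"
  then have l: "length xs = m" and s: "sum_list xs + a = K"
    and c: "\<And>j. j \<in> {2..Suc m} \<Longrightarrow> (xs @ [a]) ! (j - 1) \<ge> 1"
    by (auto simp: Lambda_set_def)
  have "\<forall>j\<in>{2..m}. xs ! (j - 1) \<ge> 1"
  proof
    fix j assume j: "j \<in> {2..m}"
    then have "(xs @ [a]) ! (j - 1) \<ge> 1" using c by auto
    then show "xs ! (j - 1) \<ge> 1" using j l by (auto simp: nth_append split: if_splits)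
  qed
  moreover have "m \<ge> 1 \<longrightarrow> a \<ge> 1"
    using c[of "Suc m"] l by (auto simp: nth_append)
  ultimately show "xs \<in> Lambda_set m (K - a) \<and> a \<le> K \<and> (m \<ge> 1 \<longrightarrow> a \<ge> 1)"
    using l s by (auto simp: Lambda_set_def)
next
  assume A: "xs \<in> Lambda_set m (K - a) \<and> a \<le> K \<and> (m \<ge> 1 \<longrightarrow> a \<ge> 1)"
  then have l: "length xs = m" and s: "sum_list xs + a = K"
    and c: "\<And>j. j \<in> {2..m} \<Longrightarrow> xs ! (j - 1) \<ge> 1" and am: "m \<ge> 1 \<longrightarrow> a \<ge> 1"
    by (auto simp: Lambda_set_def)
  have "\<forall>j\<in>{2..Suc m}. (xs @ [a]) ! (j - 1) \<ge> 1"
  proof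
    fix j assume j: "j \<in> {2..Suc m}"
    show "(xs @ [a]) ! (j - 1) \<ge> 1"
    proof (cases "j = Suc m")
      case True then show ?thesis using l am j by (auto simp: nth_append)
    next
      case False then show ?thesis using l c[of j] j by (auto simp: nth_append)
    qed
  qed
  then show "xs @ [a] \<in> Lambda_set (Suc m) K" using l s by (auto simp: Lambda_set_def)
qed

lemma Lambda_len: "ks \<in> Lambda_set n k \<Longrightarrow> length ks = n"
  by (simp add: Lambda_set_def)

lemma snoc_decomp: "length ks = Suc m \<Longrightarrow> ks = butlast ks @ [last ks] \<and> length (butlast ks) = m"
  by (cases ks rule: rev_cases) auto

definition f1 :: "nat list \<Rightarrow> nat list" where "f1 ks = butlast ks @ [Suc (last ks)]"

lemma Lambda_Suc_sum:
  fixes h :: "nat list \<Rightarrow> real"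
  shows "(\<Sum>ks\<in>Lambda_set (Suc m) (Suc k). h ks) =
     (\<Sum>ks\<in>Lambda_set (Suc m) k. h (f1 ks)) + (if m \<ge> 1 then (\<Sum>xs\<in>Lambda_set m k. h (xs @ [1])) else 0)"
proof -
  define S1 where "S1 = f1 ` Lambda_set (Suc m) k"
  define S2 where "S2 = (if m \<ge> 1 then (\<lambda>xs. xs @ [1]) ` Lambda_set m k else {})"
  have inj1: "inj_on f1 (Lambda_set (Suc m) k)"
  proof
    fix x y assume x: "x \<in> Lambda_set (Suc m) k" and y: "y \<in> Lambda_set (Suc m) k" and e: "f1 x = f1 y"
    have "x = butlast x @ [last x]" "y = butlast y @ [last y]"
      using snoc_decomp[OF Lambda_len[OF x]] snoc_decomp[OF Lambda_len[OF y]] by auto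
    moreover have "butlast x = butlast y" "last x = last y" using e by (auto simp: f1_def)
    ultimately show "x = y" by metis
  qed
  have inj2: "inj_on (\<lambda>xs. xs @ [1::nat]) (Lambda_set m k)" by (auto intro: inj_onI)
  have S1sub: "S1 \<subseteq> {ks \<in> Lambda_set (Suc m) (Suc k). last ks \<ge> 2 \<or> m = 0}"
  proof
    fix ks assume "ks \<in> S1"
    then obtain x where x: "x \<in> Lambda_set (Suc m) k" and ks: "ks = f1 x" by (auto simp: S1_def)
    have d: "x = butlast x @ [last x]" "length (butlast x) = m" using snoc_decomp[OF Lambda_len[OF x]] by auto
    have "(butlast x @ [last x]) \<in> Lambda_set (Suc m) k" using x d by simp
    then have H: "butlast x \<in> Lambda_set m (k - last x) \<and> last x \<le> k \<and> (m \<ge> 1 \<longrightarrow> last x \<ge> 1)"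
      using Lambda_snoc[of "butlast x" "last x" m k] by blast
    have "(butlast x @ [Suc (last x)]) \<in> Lambda_set (Suc m) (Suc k)"
      unfolding Lambda_snoc using H by simp
    then show "ks \<in> {ks \<in> Lambda_set (Suc m) (Suc k). last ks \<ge> 2 \<or> m = 0}"
      using \<open>butlast x \<in> Lambda_set m (k - last x) \<and> last x \<le> k \<and> (m \<ge> 1 \<longrightarrow> last x \<ge> 1)\<close>
      by (auto simp: ks f1_def)
  qed
  have S2sub: "S2 \<subseteq> {ks \<in> Lambda_set (Suc m) (Suc k). last ks = 1 \<and> m \<ge> 1}"
  proof
    fix ks assume "ks \<in> S2"
    then obtain x where x: "x \<in> Lambda_set m k" and ks: "ks = x @ [1]" and m: "m \<ge> 1"
      by (auto simp: S2_def split: if_splits)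
    have "(x @ [1]) \<in> Lambda_set (Suc m) (Suc k)" using x by (simp only: Lambda_snoc) auto
    then show "ks \<in> {ks \<in> Lambda_set (Suc m) (Suc k). last ks = 1 \<and> m \<ge> 1}" using ks m by auto
  qed
  have cover: "Lambda_set (Suc m) (Suc k) \<subseteq> S1 \<union> S2"
  proof
    fix ks assume ks: "ks \<in> Lambda_set (Suc m) (Suc k)"
    define xs where "xs = butlast ks"
    define a where "a = last ks"
    have d: "ks = xs @ [a]" "length xs = m" using snoc_decomp[OF Lambda_len[OF ks]] by (auto simp: xs_def a_def)
    have P: "xs \<in> Lambda_set m (Suc k - a) \<and> a \<le> Suc k \<and> (m \<ge> 1 \<longrightarrow> a \<ge> 1)"
      using ks d by (simp only: Lambda_snoc) auto
    show "ks \<in> S1 \<union> S2"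
    proof (cases "a = 1 \<and> m \<ge> 1")
      case True
      then have "xs \<in> Lambda_set m k" using P by simp
      then show ?thesis using True d by (auto simp: S2_def)
    next
      case False
      then have a1: "a \<ge> 1" using P by (cases m) (auto simp: Lambda_set_def)
      have a2: "m \<ge> 1 \<longrightarrow> a - 1 \<ge> 1" using False P by auto
      have "xs @ [a - 1] \<in> Lambda_set (Suc m) k"
        unfolding Lambda_snoc using P a1 a2 by (simp add: Suc_diff_le) linarith
      moreover have "f1 (xs @ [a - 1]) = ks" using d a1 by (simp add: f1_def)
      ultimately show ?thesis by (auto simp: S1_def)
    qed
  qed
  have eqU: "Lambda_set (Suc m) (Suc k) = S1 \<union> S2" using cover S1sub S2sub by blast
  have disj: "S1 \<inter> S2 = {}" using S1sub S2sub by force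
  have fin: "finite S1" "finite S2"
    using finite_subset[OF _ Lambda_finite] S1sub S2sub by blast+
  have "(\<Sum>ks\<in>Lambda_set (Suc m) (Suc k). h ks) = (\<Sum>ks\<in>S1. h ks) + (\<Sum>ks\<in>S2. h ks)"
    unfolding eqU by (rule sum.union_disjoint[OF fin disj])
  also have "(\<Sum>ks\<in>S1. h ks) = (\<Sum>ks\<in>Lambda_set (Suc m) k. h (f1 ks))"
    unfolding S1_def by (rule sum.reindex[OF inj1, unfolded comp_def])
  also have "(\<Sum>ks\<in>S2. h ks) = (if m \<ge> 1 then (\<Sum>xs\<in>Lambda_set m k. h (xs @ [1])) else 0)"
    unfolding S2_def using sum.reindex[OF inj2, of h] by (simp add: comp_def)
  finally show ?thesis .
qed

definition Ew :: "(nat \<Rightarrow> real) \<Rightarrow> nat \<Rightarrow> nat list \<Rightarrow> real" where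
  "Ew nu n ks = (\<Sum>j=1..n. real (ks ! (j - 1)) * nu j)"
definition Pw :: "nat \<Rightarrow> nat list \<Rightarrow> real" where
  "Pw n ks = (\<Prod>j=1..n. real j ^ (ks ! (j - 1)))"
definition Tm :: "real \<Rightarrow> (nat \<Rightarrow> real) \<Rightarrow> nat \<Rightarrow> nat \<Rightarrow> real \<Rightarrow> real" where
  "Tm lam nu n k t = ((-1) ^ (n - 1) / real n) * (-lam) ^ k *
      (\<Sum>ks\<in>Lambda_set n k. Pw n ks * phi (Ew nu n ks) t)"

lemma Ew_snoc: "length xs = m \<Longrightarrow> Ew nu (Suc m) (xs @ [a]) = Ew nu m xs + real a * nu (Suc m)"
proof -
  assume l: "length xs = m"
  have "(\<Sum>j=1..m. real ((xs @ [a]) ! (j - 1)) * nu j) = (\<Sum>j=1..m. real (xs ! (j - 1)) * nu j)"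
    by (rule sum.cong) (use l in \<open>auto simp: nth_append\<close>)
  then show ?thesis using l by (simp add: Ew_def nth_append)
qed

lemma Pw_snoc: "length xs = m \<Longrightarrow> Pw (Suc m) (xs @ [a]) = Pw m xs * real (Suc m) ^ a"
proof -
  assume l: "length xs = m"
  have "(\<Prod>j=1..m. real j ^ ((xs @ [a]) ! (j - 1))) = (\<Prod>j=1..m. real j ^ (xs ! (j - 1)))"
    by (rule prod.cong) (use l in \<open>auto simp: nth_append\<close>)
  then show ?thesis using l by (simp add: Pw_def nth_append)
qed

lemma Ew_f1: "length ks = Suc m \<Longrightarrow> Ew nu (Suc m) (f1 ks) = Ew nu (Suc m) ks + nu (Suc m)"
proof -
  assume l: "length ks = Suc m"
  from snoc_decomp[OF l] have d: "ks = butlast ks @ [last ks]" "length (butlast ks) = m" by auto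
  have "Ew nu (Suc m) (f1 ks) = Ew nu m (butlast ks) + real (Suc (last ks)) * nu (Suc m)"
    unfolding f1_def by (rule Ew_snoc[OF d(2)])
  moreover have "Ew nu (Suc m) ks = Ew nu m (butlast ks) + real (last ks) * nu (Suc m)"
    by (subst d(1)) (rule Ew_snoc[OF d(2)])
  ultimately show ?thesis by (simp add: algebra_simps)
qed

lemma Pw_f1: "length ks = Suc m \<Longrightarrow> Pw (Suc m) (f1 ks) = Pw (Suc m) ks * real (Suc m)"
proof -
  assume l: "length ks = Suc m"
  from snoc_decomp[OF l] have d: "ks = butlast ks @ [last ks]" "length (butlast ks) = m" by auto
  have "Pw (Suc m) (f1 ks) = Pw m (butlast ks) * real (Suc m) ^ Suc (last ks)"
    unfolding f1_def by (rule Pw_snoc[OF d(2)])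
  moreover have "Pw (Suc m) ks = Pw m (butlast ks) * real (Suc m) ^ last ks"
    by (subst d(1)) (rule Pw_snoc[OF d(2)])
  ultimately show ?thesis by (simp add: algebra_simps)
qed

lemma Ew_nonneg: "(\<And>j. j \<ge> 1 \<Longrightarrow> nu j > 0) \<Longrightarrow> Ew nu n ks \<ge> 0"
proof -
  assume h: "\<And>j. j \<ge> 1 \<Longrightarrow> nu j > 0"
  show ?thesis unfolding Ew_def
  proof (intro sum_nonneg)
    fix j assume "j \<in> {1..n}"
    then have "nu j > 0" using h by simp
    then show "0 \<le> real (ks ! (j - 1)) * nu j" by simp
  qed
qed

lemma phi_cont: "a \<ge> 0 \<Longrightarrow> continuous_on {0..} (phi a)"
proof -
  assume a: "a \<ge> 0"
  show ?thesis
  proof (cases "a = 0")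
    case True then show ?thesis by (simp add: phi_def)
  next
    case False
    have "continuous_on {0..} (\<lambda>t::real. t powr a)"
      using a False by (intro continuous_on_powr' continuous_intros) auto
    then have "continuous_on {0..} (\<lambda>t::real. t powr a * inverse (Gamma (1 + a)))"
      by (rule continuous_on_mult[OF _ continuous_on_const])
    then show ?thesis using False by (simp add: phi_def divide_inverse)
  qed
qed

lemma Ifr_sum_phi:
  fixes nu t :: real and S :: "'i set" and c a :: "'i \<Rightarrow> real"
  assumes nu: "nu > 0" and t: "t \<ge> 0" and S: "finite S" and a: "\<And>i. i \<in> S \<Longrightarrow> a i \<ge> 0"
  shows "Ifr nu (\<lambda>s. \<Sum>i\<in>S. c i * phi (a i) s) t = (\<Sum>i\<in>S. c i * phi (a i + nu) t)"
proof -
  have int: "(\<lambda>s. (t - s) powr (nu - 1) * (c i * phi (a i) s)) integrable_on {0..t}" if i: "i \<in> S" for i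
  proof (rule kernel_prod_int[OF nu t])
    show "continuous_on {0..t} (\<lambda>s. c i * phi (a i) s)"
      by (intro continuous_intros continuous_on_subset[OF phi_cont[OF a[OF i]]]) auto
  qed
  have "integral {0..t} (\<lambda>s. (t - s) powr (nu - 1) * (\<Sum>i\<in>S. c i * phi (a i) s))
      = integral {0..t} (\<lambda>s. \<Sum>i\<in>S. (t - s) powr (nu - 1) * (c i * phi (a i) s))"
    by (simp add: sum_distrib_left)
  also have "\<dots> = (\<Sum>i\<in>S. integral {0..t} (\<lambda>s. (t - s) powr (nu - 1) * (c i * phi (a i) s)))"
    by (rule integral_sum[OF S int])
  also have "\<dots> = (\<Sum>i\<in>S. c i * integral {0..t} (\<lambda>s. (t - s) powr (nu - 1) * phi (a i) s))"
  proof (rule sum.cong[OF refl])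
    fix i assume "i \<in> S"
    have "(\<lambda>s. (t - s) powr (nu - 1) * (c i * phi (a i) s)) = (\<lambda>s. c i * ((t - s) powr (nu - 1) * phi (a i) s))"
      by (simp add: algebra_simps)
    then show "integral {0..t} (\<lambda>s. (t - s) powr (nu - 1) * (c i * phi (a i) s)) =
        c i * integral {0..t} (\<lambda>s. (t - s) powr (nu - 1) * phi (a i) s)" by simp
  qed
  finally have "Ifr nu (\<lambda>s. \<Sum>i\<in>S. c i * phi (a i) s) t = (\<Sum>i\<in>S. c i * Ifr nu (phi (a i)) t)"
    by (simp add: Ifr_def sum_divide_distrib)
  also have "\<dots> = (\<Sum>i\<in>S. c i * phi (a i + nu) t)"
    using Ifr_phi[OF nu a t] by simp
  finally show ?thesis .
qed

lemma Ifr_add: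
  fixes nu t :: real and g h :: "real \<Rightarrow> real"
  assumes nu: "nu > 0" and t: "t \<ge> 0" and g: "continuous_on {0..t} g" and h: "continuous_on {0..t} h"
  shows "Ifr nu (\<lambda>s. g s + h s) t = Ifr nu g t + Ifr nu h t"
proof -
  have "integral {0..t} (\<lambda>s. (t - s) powr (nu - 1) * (g s + h s)) =
      integral {0..t} (\<lambda>s. (t - s) powr (nu - 1) * g s + (t - s) powr (nu - 1) * h s)"
    by (simp add: algebra_simps)
  also have "\<dots> = integral {0..t} (\<lambda>s. (t - s) powr (nu - 1) * g s) + integral {0..t} (\<lambda>s. (t - s) powr (nu - 1) * h s)"
    by (rule integral_add[OF kernel_prod_int[OF nu t g] kernel_prod_int[OF nu t h]])
  finally show ?thesis by (simp add: Ifr_def add_divide_distrib)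
qed

lemma Tm_cont: "(\<And>j. j \<ge> 1 \<Longrightarrow> nu j > 0) \<Longrightarrow> continuous_on {0..} (Tm lam nu n k)"
  unfolding Tm_def
  by (intro continuous_intros continuous_on_sum phi_cont[OF Ew_nonneg]) auto

lemma Tm_rec:
  fixes lam :: real and nu :: "nat \<Rightarrow> real"
  assumes nupos: "\<And>j. j \<ge> 1 \<Longrightarrow> nu j > 0" and t: "t \<ge> 0"
  shows "Tm lam nu (Suc m) (Suc k) t =
     Ifr (nu (Suc m)) (\<lambda>s. - lam * real (Suc m) * Tm lam nu (Suc m) k s + lam * real m * Tm lam nu m k s) t"
proof -
  define c where "c = (\<lambda>n::nat. (-1::real) ^ (n - 1) / real n)"
  have nu1: "nu (Suc m) > 0" using nupos by simp
  have A: "Ifr (nu (Suc m)) (\<lambda>s. - lam * real (Suc m) * Tm lam nu (Suc m) k s) t =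
      (\<Sum>ks\<in>Lambda_set (Suc m) k. (- lam * real (Suc m) * c (Suc m) * (-lam) ^ k * Pw (Suc m) ks) * phi (Ew nu (Suc m) ks + nu (Suc m)) t)"
  proof -
    have "(\<lambda>s. - lam * real (Suc m) * Tm lam nu (Suc m) k s) =
        (\<lambda>s. \<Sum>ks\<in>Lambda_set (Suc m) k. (- lam * real (Suc m) * c (Suc m) * (-lam) ^ k * Pw (Suc m) ks) * phi (Ew nu (Suc m) ks) s)"
      by (simp add: Tm_def c_def sum_distrib_left mult.assoc)
    then show ?thesis
      by (simp only:) (rule Ifr_sum_phi[OF nu1 t Lambda_finite Ew_nonneg[OF nupos]])
  qed
  have B: "Ifr (nu (Suc m)) (\<lambda>s. lam * real m * Tm lam nu m k s) t =
      (\<Sum>ks\<in>Lambda_set m k. (lam * real m * c m * (-lam) ^ k * Pw m ks) * phi (Ew nu m ks + nu (Suc m)) t)"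
  proof -
    have "(\<lambda>s. lam * real m * Tm lam nu m k s) =
        (\<lambda>s. \<Sum>ks\<in>Lambda_set m k. (lam * real m * c m * (-lam) ^ k * Pw m ks) * phi (Ew nu m ks) s)"
      by (simp add: Tm_def c_def sum_distrib_left mult.assoc)
    then show ?thesis
      by (simp only:) (rule Ifr_sum_phi[OF nu1 t Lambda_finite Ew_nonneg[OF nupos]])
  qed
  have AB: "Ifr (nu (Suc m)) (\<lambda>s. - lam * real (Suc m) * Tm lam nu (Suc m) k s + lam * real m * Tm lam nu m k s) t
      = Ifr (nu (Suc m)) (\<lambda>s. - lam * real (Suc m) * Tm lam nu (Suc m) k s) t + Ifr (nu (Suc m)) (\<lambda>s. lam * real m * Tm lam nu m k s) t"
    by (rule Ifr_add[OF nu1 t]) (auto intro!: continuous_intros continuous_on_subset[OF Tm_cont[OF nupos]])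
  have L: "Tm lam nu (Suc m) (Suc k) t = c (Suc m) * (-lam) ^ Suc k *
      ((\<Sum>ks\<in>Lambda_set (Suc m) k. Pw (Suc m) (f1 ks) * phi (Ew nu (Suc m) (f1 ks)) t) +
       (if m \<ge> 1 then (\<Sum>xs\<in>Lambda_set m k. Pw (Suc m) (xs @ [1]) * phi (Ew nu (Suc m) (xs @ [1])) t) else 0))"
    unfolding Tm_def c_def by (subst Lambda_Suc_sum) simp
  also have "\<dots> = (\<Sum>ks\<in>Lambda_set (Suc m) k. (- lam * real (Suc m) * c (Suc m) * (-lam) ^ k * Pw (Suc m) ks) * phi (Ew nu (Suc m) ks + nu (Suc m)) t)
      + (\<Sum>ks\<in>Lambda_set m k. (lam * real m * c m * (-lam) ^ k * Pw m ks) * phi (Ew nu m ks + nu (Suc m)) t)"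
  proof -
    have s1: "c (Suc m) * (-lam) ^ Suc k * (\<Sum>ks\<in>Lambda_set (Suc m) k. Pw (Suc m) (f1 ks) * phi (Ew nu (Suc m) (f1 ks)) t)
        = (\<Sum>ks\<in>Lambda_set (Suc m) k. (- lam * real (Suc m) * c (Suc m) * (-lam) ^ k * Pw (Suc m) ks) * phi (Ew nu (Suc m) ks + nu (Suc m)) t)"
      unfolding sum_distrib_left
    proof (rule sum.cong[OF refl])
      fix ks assume ks: "ks \<in> Lambda_set (Suc m) k"
      have l: "length ks = Suc m" using Lambda_len[OF ks] .
      show "c (Suc m) * (-lam) ^ Suc k * (Pw (Suc m) (f1 ks) * phi (Ew nu (Suc m) (f1 ks)) t) =
          (- lam * real (Suc m) * c (Suc m) * (-lam) ^ k * Pw (Suc m) ks) * phi (Ew nu (Suc m) ks + nu (Suc m)) t"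
        unfolding Ew_f1[OF l] Pw_f1[OF l] by (simp add: algebra_simps)
    qed
    have s2: "c (Suc m) * (-lam) ^ Suc k * (if m \<ge> 1 then (\<Sum>xs\<in>Lambda_set m k. Pw (Suc m) (xs @ [1]) * phi (Ew nu (Suc m) (xs @ [1])) t) else 0)
        = (\<Sum>ks\<in>Lambda_set m k. (lam * real m * c m * (-lam) ^ k * Pw m ks) * phi (Ew nu m ks + nu (Suc m)) t)"
    proof (cases "m \<ge> 1")
      case False then have "m = 0" by simp
      then show ?thesis by simp
    next
      case True
      then show ?thesis
        unfolding sum_distrib_left if_P[OF True]
      proof (intro sum.cong[OF refl])
        fix ks assume ks: "ks \<in> Lambda_set m k"
        have l: "length ks = m" using Lambda_len[OF ks] .
        have cc: "c (Suc m) * (-lam) ^ Suc k * real (Suc m) = lam * real m * c m * (-lam) ^ k"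
        proof -
          obtain m' where m': "m = Suc m'" using True by (cases m) auto
          have "c (Suc m) * (-lam) ^ Suc k * real (Suc m) = (-1) ^ m * (-lam) ^ Suc k"
            unfolding c_def by simp
          also have "\<dots> = lam * (-1) ^ m' * (-lam) ^ k" unfolding m' by simp
          also have "\<dots> = lam * real m * c m * (-lam) ^ k" unfolding c_def m' by simp
          finally show ?thesis .
        qed
        show "c (Suc m) * (-lam) ^ Suc k * (Pw (Suc m) (ks @ [1]) * phi (Ew nu (Suc m) (ks @ [1])) t) =
            (lam * real m * c m * (-lam) ^ k * Pw m ks) * phi (Ew nu m ks + nu (Suc m)) t"
        proof -
          have "c (Suc m) * (-lam) ^ Suc k * (Pw (Suc m) (ks @ [1]) * phi (Ew nu (Suc m) (ks @ [1])) t)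
              = (c (Suc m) * (-lam) ^ Suc k * real (Suc m)) * (Pw m ks * phi (Ew nu m ks + nu (Suc m)) t)"
            unfolding Ew_snoc[OF l] Pw_snoc[OF l] by (simp only: mult_ac power_one_right of_nat_1 mult_1)
          also have "\<dots> = (lam * real m * c m * (-lam) ^ k) * (Pw m ks * phi (Ew nu m ks + nu (Suc m)) t)"
            by (simp only: cc)
          also have "\<dots> = (lam * real m * c m * (-lam) ^ k * Pw m ks) * phi (Ew nu m ks + nu (Suc m)) t"
            by (simp only: mult_ac)
          finally show ?thesis .
        qed
      qed
    qed
    show ?thesis using s1 s2 by (simp add: distrib_left)
  qed
  finally show ?thesis using A B AB by simp
qed

lemma gamma_lower:
  fixes a :: real assumes a: "a \<ge> 0"
  shows "fact (nat \<lfloor>a\<rfloor>) / 2 \<le> Gamma (1 + a)"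
proof -
  define m where "m = nat \<lfloor>a\<rfloor>"
  have ma: "real m \<le> a" "a < real m + 1" using a unfolding m_def by linarith+
  have g2: "Gamma (2 + real m) \<le> Gamma (2 + a)"
  proof (cases "a = real m")
    case True then show ?thesis by simp
  next
    case False then have "2 + real m < 2 + a" using ma by simp
    then show ?thesis using Gamma_real_strict_mono[of "2 + real m" "2 + a"] by simp
  qed
  have "Gamma (2 + real m) = fact (Suc m)"
    using Gamma_fact[of "Suc m"] by (simp add: add.commute)
  moreover have "Gamma (2 + a) = (1 + a) * Gamma (1 + a)"
  proof -
    have "1 + a \<notin> \<int>\<^sub>\<le>\<^sub>0" using a by (auto elim!: nonpos_Ints_cases)
    then have "Gamma (1 + a + 1) = (1 + a) * Gamma (1 + a)" by (rule Gamma_plus1)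
    then show ?thesis by (simp add: add.commute add.left_commute)
  qed
  ultimately have "fact (Suc m) \<le> (1 + a) * Gamma (1 + a)" using g2 by simp
  moreover have "Gamma (1 + a) > 0" using a by simp
  ultimately have "fact (Suc m) \<le> (real m + 2) * Gamma (1 + a)"
    using ma by (smt (verit, best) mult_right_mono)
  then have "real (Suc m) * fact m \<le> (real m + 2) * Gamma (1 + a)" by simp
  moreover have "(real m + 2) * (fact m / 2) \<le> real (Suc m) * fact m"
  proof -
    have "(real m + 2) / 2 \<le> real (Suc m)" by simp
    then show ?thesis using fact_ge_zero[of m, where 'a=real]
      by (metis (no_types, lifting) mult.commute mult_right_mono times_divide_eq_left)
  qed
  ultimately have "(real m + 2) * (fact m / 2) \<le> (real m + 2) * Gamma (1 + a)" by linarith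
  then show ?thesis unfolding m_def[symmetric] by (simp add: mult_le_cancel_left_pos)
qed

lemma pow_fact_exp:
  fixes x :: real assumes x: "x \<ge> 0"
  shows "x ^ m / fact m \<le> exp x"
proof -
  have s: "(\<lambda>n. x ^ n / fact n) sums exp x" using exp_converges[of x] by (simp add: divide_inverse mult.commute scaleR_conv_of_real)
  have "(\<Sum>n\<in>{m}. x ^ n / fact n) \<le> suminf (\<lambda>n. x ^ n / fact n)"
    by (rule sum_le_suminf) (use s x in \<open>auto simp: sums_iff\<close>)
  then show ?thesis using s by (simp add: sums_iff)
qed

lemma phi_bound:
  fixes mu x R t a :: real and k :: nat
  assumes mu: "mu > 0" and x: "x \<ge> 1" and R: "R \<ge> 1" and t: "0 \<le> t" "t \<le> R"
    and a1: "mu * real k \<le> a" and a2: "a \<le> real k"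
  shows "\<bar>phi a t\<bar> \<le> R ^ k * (2 * exp x * x) * (x powr (- mu)) ^ k"
proof (cases "a = 0")
  case True
  then have "k = 0" using a1 mu by (simp add: mult_le_0_iff)
  moreover have "1 \<le> 2 * exp x * x"
  proof -
    have "1 \<le> exp x" using x by simp
    then have "1 * 1 \<le> exp x * x" using x by (intro mult_mono) auto
    then show ?thesis by simp
  qed
  ultimately show ?thesis using True by (simp add: phi_def)
next
  case False
  then have a: "a > 0" using a1 mu by (smt (verit) mult_nonneg_nonneg of_nat_0_le_iff)
  define m where "m = nat \<lfloor>a\<rfloor>"
  have Gpos: "Gamma (1 + a) > 0" using a by simp
  have "t powr a \<le> R powr a" using t a by (intro powr_mono2) auto
  also have "\<dots> \<le> R powr real k" using R a2 by (intro powr_mono) auto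
  also have "\<dots> = R ^ k" using R by (simp add: powr_realpow)
  finally have tp: "t powr a \<le> R ^ k" .
  have "1 / Gamma (1 + a) \<le> 1 / (fact m / 2)"
    using gamma_lower[of a] a by (intro divide_left_mono) (auto simp: m_def)
  also have "\<dots> = 2 / fact m" by simp
  also have "\<dots> \<le> 2 * (exp x / x ^ m)"
  proof -
    have "x ^ m / fact m \<le> exp x" using pow_fact_exp x by simp
    then have "1 / fact m \<le> exp x / x ^ m" using x by (simp add: field_simps)
    then show ?thesis by simp
  qed
  also have "\<dots> \<le> 2 * (exp x * (x * (x powr (- mu)) ^ k))"
  proof -
    have "x powr (mu * real k - 1) \<le> x powr real m"
      using x a1 unfolding m_def by (intro powr_mono) linarith+
    then have "x powr (mu * real k - 1) \<le> x ^ m" using x by (simp add: powr_realpow)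
    then have "1 / x ^ m \<le> 1 / x powr (mu * real k - 1)" using x
      by (intro divide_left_mono) auto
    also have "1 / x powr (mu * real k - 1) = x * (x powr (- mu)) ^ k"
    proof -
      have x0: "x > 0" using x by simp
      have "(x powr (- mu)) ^ k = x powr (- mu * real k)"
        using x0 by (simp add: powr_realpow[symmetric] powr_powr)
      moreover have "1 / x powr (mu * real k - 1) = x powr (- (mu * real k - 1))"
        by (metis powr_minus_divide)
      moreover have "x powr (- (mu * real k - 1)) = x powr 1 * x powr (- mu * real k)"
        by (simp only: powr_add[symmetric]) (simp add: algebra_simps)
      ultimately show ?thesis using x0 by simp
    qed
    finally have "1 / x ^ m \<le> x * (x powr (- mu)) ^ k" .
    then have "exp x * (1 / x ^ m) \<le> exp x * (x * (x powr (- mu)) ^ k)" by (intro mult_left_mono) auto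
    then show ?thesis by simp
  qed
  finally have ig: "1 / Gamma (1 + a) \<le> 2 * exp x * x * (x powr (- mu)) ^ k" by (simp add: mult_ac)
  have "\<bar>phi a t\<bar> = t powr a * (1 / Gamma (1 + a))" using False Gpos by (simp add: phi_def)
  also have "\<dots> \<le> R ^ k * (2 * exp x * x * (x powr (- mu)) ^ k)"
    using tp ig Gpos R by (intro mult_mono) auto
  finally show ?thesis by (simp add: mult_ac)
qed

lemma sum_shift1: "(\<Sum>j=1..(n::nat). f (j - 1)) = (\<Sum>i<n. (f i :: 'a::comm_monoid_add))"
  by (induction n) (auto simp: add.commute)

lemma sum_nth1: "length ks = n \<Longrightarrow> (\<Sum>j=1..n. ks ! (j - 1)) = sum_list ks"
  using sum_shift1[where n=n and f="\<lambda>i. ks ! i"] by (simp add: sum_list_sum_nth atLeast0LessThan)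

lemma Ew_bounds:
  assumes ks: "ks \<in> Lambda_set n k" and mu: "\<And>j. j \<in> {1..n} \<Longrightarrow> mu \<le> nu j \<and> nu j \<le> 1"
  shows "mu * real k \<le> Ew nu n ks" "Ew nu n ks \<le> real k"
proof -
  have l: "length ks = n" and s: "sum_list ks = k" using ks by (auto simp: Lambda_set_def)
  have sk: "(\<Sum>j=1..n. real (ks ! (j - 1))) = real k"
    using sum_nth1[OF l] s by (metis of_nat_sum)
  have "(\<Sum>j=1..n. real (ks ! (j - 1)) * mu) \<le> Ew nu n ks"
    unfolding Ew_def by (intro sum_mono mult_left_mono) (use mu in auto)
  then show "mu * real k \<le> Ew nu n ks" using sk by (simp add: sum_distrib_right[symmetric] sum_distrib_left[symmetric] mult.commute)
  have "Ew nu n ks \<le> (\<Sum>j=1..n. real (ks ! (j - 1)) * 1)"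
    unfolding Ew_def by (intro sum_mono mult_left_mono) (use mu in auto)
  then show "Ew nu n ks \<le> real k" using sk by simp
qed

lemma Pw_bound:
  assumes ks: "ks \<in> Lambda_set n k"
  shows "0 \<le> Pw n ks" "Pw n ks \<le> real n ^ k"
proof -
  have l: "length ks = n" and s: "sum_list ks = k" using ks by (auto simp: Lambda_set_def)
  show "0 \<le> Pw n ks" unfolding Pw_def by (intro prod_nonneg) auto
  have "Pw n ks \<le> (\<Prod>j=1..n. real n ^ (ks ! (j - 1)))"
    unfolding Pw_def by (intro prod_mono conjI power_mono) auto
  also have "\<dots> = real n ^ (\<Sum>j=1..n. ks ! (j - 1))" by (simp add: power_sum)
  also have "\<dots> = real n ^ k" using sum_nth1[OF l] s by simp
  finally show "Pw n ks \<le> real n ^ k" .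
qed

lemma Tm_bound:
  fixes lam R :: real and nu :: "nat \<Rightarrow> real" and n :: nat
  assumes nu: "\<And>j. j \<ge> 1 \<Longrightarrow> 0 < nu j \<and> nu j \<le> 1" and R: "R \<ge> 1"
  shows "\<exists>C rho. 0 \<le> C \<and> 0 \<le> rho \<and> rho < 1 \<and>
           (\<forall>k t. 0 \<le> t \<longrightarrow> t \<le> R \<longrightarrow> \<bar>Tm lam nu n k t\<bar> \<le> C * rho ^ k)"
proof (cases "n = 0")
  case True
  then show ?thesis by (intro exI[of _ 0]) (auto simp: Tm_def)
next
  case False
  then have n1: "n \<ge> 1" by simp
  define mu where "mu = Min (nu ` {1..n})"
  have mu_pos: "mu > 0" unfolding mu_def using n1 nu by (subst Min_gr_iff) auto
  have mu_le: "mu \<le> nu j" if "j \<in> {1..n}" for j unfolding mu_def using that by (intro Min_le) auto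
  define A where "A = \<bar>lam\<bar> * 2 ^ n * real n * R"
  have A0: "A \<ge> 0" using R by (simp add: A_def)
  define x where "x = max 1 ((2 * A + 1) powr (1 / mu))"
  have x1: "x \<ge> 1" by (simp add: x_def)
  have xmu: "x powr mu \<ge> 2 * A + 1"
  proof -
    have "((2 * A + 1) powr (1 / mu)) powr mu \<le> x powr mu"
      using mu_pos A0 by (intro powr_mono2) (auto simp: x_def)
    moreover have "((2 * A + 1) powr (1 / mu)) powr mu = 2 * A + 1"
      using mu_pos A0 by (simp add: powr_powr)
    ultimately show ?thesis by simp
  qed
  define rho where "rho = A * x powr (- mu)"
  have rho0: "rho \<ge> 0" using A0 by (simp add: rho_def)
  have rho1: "rho < 1"
  proof -
    have xp: "x powr mu > 0" using x1 by simp
    have "rho = A / x powr mu" by (simp add: rho_def powr_minus divide_inverse)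
    also have "\<dots> < 1" using xp xmu A0 by (simp add: divide_less_eq)
    finally show ?thesis .
  qed
  define C where "C = 2 * exp x * x"
  have C0: "C \<ge> 0" using x1 by (simp add: C_def)
  have bound: "\<bar>Tm lam nu n k t\<bar> \<le> C * rho ^ k" if t: "0 \<le> t" "t \<le> R" for k t
  proof -
    define Bk where "Bk = R ^ k * C * (x powr (- mu)) ^ k"
    have Bk0: "Bk \<ge> 0" using R C0 by (simp add: Bk_def)
    have tb: "\<bar>Pw n ks * phi (Ew nu n ks) t\<bar> \<le> real n ^ k * Bk" if ks: "ks \<in> Lambda_set n k" for ks
    proof -
      have e: "mu * real k \<le> Ew nu n ks" "Ew nu n ks \<le> real k"
        using Ew_bounds[OF ks, of mu] mu_le nu by auto
      have "\<bar>phi (Ew nu n ks) t\<bar> \<le> Bk"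
        using phi_bound[OF mu_pos x1 R t e] by (simp add: Bk_def C_def mult_ac)
      then show ?thesis using Pw_bound[OF ks] Bk0
        by (simp add: abs_mult) (intro mult_mono, auto)
    qed
    have "\<bar>\<Sum>ks\<in>Lambda_set n k. Pw n ks * phi (Ew nu n ks) t\<bar> \<le> (\<Sum>ks\<in>Lambda_set n k. \<bar>Pw n ks * phi (Ew nu n ks) t\<bar>)"
      by (rule sum_abs)
    also have "\<dots> \<le> real (card (Lambda_set n k)) * (real n ^ k * Bk)"
      by (rule sum_bounded_above) (use tb in auto)
    also have "\<dots> \<le> (2 ^ n) ^ k * (real n ^ k * Bk)"
    proof -
      have "card (Lambda_set n k) \<le> (k + 1) ^ n" by (rule Lambda_card)
      also have "\<dots> \<le> (2 ^ k) ^ n" by (intro power_mono) (use less_exp[of k] in \<open>auto simp: Suc_le_eq\<close>)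
      also have "\<dots> = (2 ^ n) ^ k" by (simp add: power_mult[symmetric] mult.commute)
      finally have "real (card (Lambda_set n k)) \<le> (2 ^ n) ^ k" by (metis of_nat_le_iff of_nat_numeral of_nat_power)
      then show ?thesis using Bk0 by (intro mult_right_mono) auto
    qed
    finally have S: "\<bar>\<Sum>ks\<in>Lambda_set n k. Pw n ks * phi (Ew nu n ks) t\<bar> \<le> (2 ^ n) ^ k * (real n ^ k * Bk)" .
    have cn: "\<bar>(-1) ^ (n - 1) / real n\<bar> \<le> (1::real)" using n1 by simp
    have "\<bar>Tm lam nu n k t\<bar> = \<bar>(-1) ^ (n - 1) / real n\<bar> * \<bar>lam\<bar> ^ k * \<bar>\<Sum>ks\<in>Lambda_set n k. Pw n ks * phi (Ew nu n ks) t\<bar>"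
      by (simp add: Tm_def abs_mult power_abs)
    also have "\<dots> \<le> 1 * \<bar>lam\<bar> ^ k * ((2 ^ n) ^ k * (real n ^ k * Bk))"
      using cn S by (intro mult_mono) auto
    also have "\<dots> = C * rho ^ k"
      by (simp add: Bk_def rho_def A_def power_mult_distrib mult_ac)
    finally show ?thesis .
  qed
  show ?thesis using C0 rho0 rho1 bound by blast
qed

definition Q :: "real \<Rightarrow> (nat \<Rightarrow> real) \<Rightarrow> nat \<Rightarrow> real \<Rightarrow> real" where
  "Q lam nu n t = (\<Sum>k. Tm lam nu n k t)"

locale nuloc =
  fixes nu :: "nat \<Rightarrow> real"
  assumes nu: "\<And>j. j \<ge> 1 \<Longrightarrow> 0 < nu j \<and> nu j \<le> 1"
begin

lemma nupos: "j \<ge> 1 \<Longrightarrow> nu j > 0" using nu by auto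

lemma Tm_bound': "R \<ge> 0 \<Longrightarrow> \<exists>C rho. 0 \<le> C \<and> 0 \<le> rho \<and> rho < 1 \<and>
           (\<forall>k t. 0 \<le> t \<longrightarrow> t \<le> R \<longrightarrow> \<bar>Tm lam nu n k t\<bar> \<le> C * rho ^ k)"
proof -
  assume "R \<ge> 0"
  obtain C rho where "0 \<le> C" "0 \<le> rho" "rho < 1"
    and b: "\<forall>k t. 0 \<le> t \<longrightarrow> t \<le> max 1 R \<longrightarrow> \<bar>Tm lam nu n k t\<bar> \<le> C * rho ^ k"
    using Tm_bound[where R="max 1 R" and lam=lam and n=n and nu=nu] nu by auto
  then show ?thesis by (intro exI[of _ C] exI[of _ rho]) auto
qed

lemma Q_unif:
  assumes R: "R \<ge> 0"
  shows "uniform_limit {0..R} (\<lambda>N s. \<Sum>k<N. Tm lam nu n k s) (Q lam nu n) sequentially"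
proof -
  obtain C rho where C: "0 \<le> C" "0 \<le> rho" "rho < 1"
    and b: "\<And>k t. 0 \<le> t \<Longrightarrow> t \<le> R \<Longrightarrow> \<bar>Tm lam nu n k t\<bar> \<le> C * rho ^ k"
    using Tm_bound'[OF R, of lam n] by auto
  have "uniform_limit {0..R} (\<lambda>N s. \<Sum>k<N. Tm lam nu n k s) (\<lambda>s. \<Sum>k. Tm lam nu n k s) sequentially"
    by (rule Weierstrass_m_test[where M = "\<lambda>k. C * rho ^ k"])
       (use b C in \<open>auto intro!: summable_mult summable_geometric\<close>)
  then show ?thesis unfolding Q_def .
qed

lemma Q_summable: "t \<ge> 0 \<Longrightarrow> summable (\<lambda>k. Tm lam nu n k t)"
proof -
  assume t: "t \<ge> 0"
  obtain C rho where C: "0 \<le> C" "0 \<le> rho" "rho < 1"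
    and b: "\<And>k s. 0 \<le> s \<Longrightarrow> s \<le> t \<Longrightarrow> \<bar>Tm lam nu n k s\<bar> \<le> C * rho ^ k"
    using Tm_bound'[OF t, of lam n] by auto
  show ?thesis
    by (rule summable_comparison_test[where g = "\<lambda>k. C * rho ^ k"])
       (use b C t in \<open>auto intro!: summable_mult summable_geometric exI[of _ 0]\<close>)
qed

lemma Q_cont: "R \<ge> 0 \<Longrightarrow> continuous_on {0..R} (Q lam nu n)"
proof -
  assume R: "R \<ge> 0"
  show ?thesis
  proof (rule uniform_limit_theorem[OF _ Q_unif[OF R]])
    show "\<forall>\<^sub>F N in sequentially. continuous_on {0..R} (\<lambda>s. \<Sum>k<N. Tm lam nu n k s)"
      by (intro always_eventually allI continuous_on_sum continuous_on_subset[OF Tm_cont[OF nupos]]) auto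
  qed simp
qed

end

lemma Ifr_diff:
  fixes nu t :: real and g h :: "real \<Rightarrow> real"
  assumes nu: "nu > 0" and t: "t \<ge> 0" and g: "continuous_on {0..t} g" and h: "continuous_on {0..t} h"
  shows "Ifr nu (\<lambda>s. g s - h s) t = Ifr nu g t - Ifr nu h t"
proof -
  have "integral {0..t} (\<lambda>s. (t - s) powr (nu - 1) * (g s - h s)) =
      integral {0..t} (\<lambda>s. (t - s) powr (nu - 1) * g s - (t - s) powr (nu - 1) * h s)"
    by (simp add: algebra_simps)
  also have "\<dots> = integral {0..t} (\<lambda>s. (t - s) powr (nu - 1) * g s) - integral {0..t} (\<lambda>s. (t - s) powr (nu - 1) * h s)"
    by (rule integral_diff[OF kernel_prod_int[OF nu t g] kernel_prod_int[OF nu t h]])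
  finally show ?thesis by (simp add: Ifr_def diff_divide_distrib)
qed

lemma Ifr_sum_fun:
  fixes nu t :: real and g :: "nat \<Rightarrow> real \<Rightarrow> real"
  assumes nu: "nu > 0" and t: "t \<ge> 0" and g: "\<And>k. continuous_on {0..t} (g k)"
  shows "Ifr nu (\<lambda>s. \<Sum>k<N. g k s) t = (\<Sum>k<N. Ifr nu (g k) t)"
proof (induction N)
  case 0 then show ?case by (simp add: Ifr_def)
next
  case (Suc N)
  have "Ifr nu (\<lambda>s. \<Sum>k<Suc N. g k s) t = Ifr nu (\<lambda>s. (\<Sum>k<N. g k s) + g N s) t" by simp
  also have "\<dots> = Ifr nu (\<lambda>s. \<Sum>k<N. g k s) t + Ifr nu (g N) t"
    by (rule Ifr_add[OF nu t]) (auto intro!: continuous_on_sum g)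
  finally show ?case using Suc by simp
qed

lemma Ifr_small:
  fixes nu t e :: real and h :: "real \<Rightarrow> real"
  assumes nu: "nu > 0" and t: "t \<ge> 0" and h: "continuous_on {0..t} h"
    and b: "\<And>s. s \<in> {0..t} \<Longrightarrow> \<bar>h s\<bar> \<le> e"
  shows "\<bar>Ifr nu h t\<bar> \<le> e * (t powr nu / nu) / Gamma nu"
proof -
  have kint: "((\<lambda>s. (t - s) powr (nu - 1) * e) has_integral (t - 0) powr nu / nu * e) {0..t}"
    using has_integral_mult_left[OF kernel_has_integral[OF nu t]] .
  have "norm (integral {0..t} (\<lambda>s. (t - s) powr (nu - 1) * h s)) \<le> integral {0..t} (\<lambda>s. (t - s) powr (nu - 1) * e)"
  proof (rule integral_norm_bound_integral[OF kernel_prod_int[OF nu t h]])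
    show "(\<lambda>s. (t - s) powr (nu - 1) * e) integrable_on {0..t}" using kint by blast
    fix s assume s: "s \<in> {0..t}"
    then show "norm ((t - s) powr (nu - 1) * h s) \<le> (t - s) powr (nu - 1) * e"
      using b[OF s] by (simp add: abs_mult mult_left_mono)
  qed
  also have "\<dots> = (t - 0) powr nu / nu * e" by (rule integral_unique[OF kint])
  finally have "\<bar>integral {0..t} (\<lambda>s. (t - s) powr (nu - 1) * h s)\<bar> \<le> t powr nu / nu * e" by simp
  moreover have "Gamma nu > 0" using nu by simp
  ultimately have "\<bar>integral {0..t} (\<lambda>s. (t - s) powr (nu - 1) * h s)\<bar> / Gamma nu \<le> (t powr nu / nu * e) / Gamma nu"
    by (intro divide_right_mono) auto
  then show ?thesis using \<open>Gamma nu > 0\<close> by (simp add: Ifr_def abs_div mult.commute)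
qed

lemma Tm_zero_n: "Tm lam nu 0 k t = 0" by (simp add: Tm_def)

lemma Q_zero_n: "Q lam nu 0 t = 0" by (simp add: Q_def Tm_zero_n)

lemma Lambda_1_0: "Lambda_set 1 0 = {[0]}"
proof
  show "Lambda_set 1 0 \<subseteq> {[0]}"
  proof
    fix ks assume "ks \<in> Lambda_set 1 0"
    then have "length ks = 1" "sum_list ks = 0" by (auto simp: Lambda_set_def)
    then show "ks \<in> {[0]}" by (cases ks) auto
  qed
  show "{[0]} \<subseteq> Lambda_set 1 0" by (auto simp: Lambda_set_def)
qed

lemma Lambda_ge2_0: "n \<ge> 2 \<Longrightarrow> Lambda_set n 0 = {}"
proof (rule ccontr)
  assume n: "n \<ge> 2" and "Lambda_set n 0 \<noteq> {}"
  then obtain ks where ks: "ks \<in> Lambda_set n 0" by auto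
  then have l: "length ks = n" and s: "sum_list ks = 0" and C: "\<forall>j\<in>{2..n}. ks ! (j - 1) \<ge> 1"
    by (simp_all add: Lambda_set_def)
  have c: "ks ! 1 \<ge> 1" using C[rule_format, of 2] n by simp
  have "ks ! 1 \<le> sum_list ks" using l n by (intro elem_le_sum_list) auto
  then show False using s c by simp
qed

lemma (in nuloc) Tm_0_const: "Tm lam nu n 0 t = Tm lam nu n 0 0"
proof -
  have "Ew nu n ks = 0" if ks: "ks \<in> Lambda_set n 0" for ks
  proof -
    have h: "\<And>j. j \<in> {1..n} \<Longrightarrow> 0 \<le> nu j \<and> nu j \<le> 1" using nu by (auto intro: less_imp_le)
    show ?thesis using Ew_bounds[where mu=0 and nu=nu, OF ks h] by simp
  qed
  then show ?thesis unfolding Tm_def by (intro arg_cong[where f = "\<lambda>x. _ * x"] sum.cong) (auto simp: phi_def)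
qed

lemma Tm_0_val: "n \<ge> 1 \<Longrightarrow> Tm lam nu n 0 0 = (if n = 1 then 1 else 0)"
proof -
  assume n: "n \<ge> 1"
  show ?thesis
  proof (cases "n = 1")
    case True
    have L: "Lambda_set (Suc 0) 0 = {[0]}" using Lambda_1_0 by simp
    show ?thesis using True by (simp add: Tm_def L Pw_def Ew_def phi_def)
  next
    case False
    then show ?thesis using n Lambda_ge2_0[of n] by (simp add: Tm_def)
  qed
qed

context nuloc begin

lemma Q_volterra:
  assumes t: "t \<ge> 0"
  shows "Q lam nu (Suc m) t = Tm lam nu (Suc m) 0 t +
     Ifr (nu (Suc m)) (\<lambda>s. - lam * real (Suc m) * Q lam nu (Suc m) s + lam * real m * Q lam nu m s) t"
proof -
  define n where "n = Suc m"
  define v where "v = nu (Suc m)"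
  have v: "v > 0" unfolding v_def using nupos by simp
  define g where "g = (\<lambda>k s. - lam * real n * Tm lam nu n k s + lam * real m * Tm lam nu m k s)"
  define G where "G = (\<lambda>s. - lam * real n * Q lam nu n s + lam * real m * Q lam nu m s)"
  have gc: "continuous_on {0..t} (g k)" for k
    unfolding g_def by (intro continuous_intros continuous_on_subset[OF Tm_cont[OF nupos]]) auto
  have Gc: "continuous_on {0..t} G"
    unfolding G_def by (intro continuous_intros Q_cont t)
  have U0: "uniform_limit {0..t} (\<lambda>N s. (- lam * real n) * (\<Sum>k<N. Tm lam nu n k s) + (lam * real m) * (\<Sum>k<N. Tm lam nu m k s))
      (\<lambda>s. (- lam * real n) * Q lam nu n s + (lam * real m) * Q lam nu m s) sequentially"
    by (intro uniform_limit_add bounded_linear.uniform_limit[OF bounded_linear_mult_right] Q_unif t)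
  have e1: "(\<lambda>N s. (- lam * real n) * (\<Sum>k<N. Tm lam nu n k s) + (lam * real m) * (\<Sum>k<N. Tm lam nu m k s))
      = (\<lambda>N s. \<Sum>k<N. g k s)"
    by (simp only: g_def sum.distrib sum_distrib_left)
  have U: "uniform_limit {0..t} (\<lambda>N s. \<Sum>k<N. g k s) G sequentially"
    using U0 unfolding e1 G_def by (simp add: mult.assoc)
  have lim: "(\<lambda>N. \<Sum>k<N. Ifr v (g k) t) \<longlonglongrightarrow> Ifr v G t"
  proof (rule tendstoI)
    fix e :: real assume e: "e > 0"
    define kap where "kap = t powr v / v / Gamma v + 1"
    have "Gamma v > 0" using v by simp
    then have X0: "t powr v / v / Gamma v \<ge> 0" using v by simp
    then have kap: "kap > 0" unfolding kap_def by linarith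
    have "\<forall>\<^sub>F N in sequentially. \<forall>s\<in>{0..t}. dist (\<Sum>k<N. g k s) (G s) < e / kap"
      using uniform_limitD[OF U] e kap by simp
    then show "\<forall>\<^sub>F N in sequentially. dist (\<Sum>k<N. Ifr v (g k) t) (Ifr v G t) < e"
    proof eventually_elim
      case (elim N)
      have sc: "continuous_on {0..t} (\<lambda>s. \<Sum>k<N. g k s)" by (intro continuous_on_sum gc)
      have "(\<Sum>k<N. Ifr v (g k) t) = Ifr v (\<lambda>s. \<Sum>k<N. g k s) t"
        by (rule Ifr_sum_fun[OF v t gc, symmetric])
      then have "dist (\<Sum>k<N. Ifr v (g k) t) (Ifr v G t) = \<bar>Ifr v (\<lambda>s. (\<Sum>k<N. g k s) - G s) t\<bar>"
        using Ifr_diff[OF v t sc Gc] by (simp add: dist_real_def)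
      also have "\<dots> \<le> e / kap * (t powr v / v) / Gamma v"
      proof (rule Ifr_small[OF v t])
        show "continuous_on {0..t} (\<lambda>s. (\<Sum>k<N. g k s) - G s)" by (intro continuous_intros sc Gc)
        fix s assume s: "s \<in> {0..t}"
        have "\<bar>(\<Sum>k<N. g k s) - G s\<bar> < e / kap" using elim s by (simp add: dist_real_def)
        then show "\<bar>(\<Sum>k<N. g k s) - G s\<bar> \<le> e / kap" by simp
      qed
      also have "\<dots> = e * ((t powr v / v / Gamma v) / kap)" by simp
      also have "\<dots> < e * 1"
      proof (rule mult_strict_left_mono[OF _ e])
        have "t powr v / v / Gamma v < kap" unfolding kap_def by simp
        then show "t powr v / v / Gamma v / kap < 1" using kap by (simp only: divide_less_eq) simp
      qed
      finally show ?case by simp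
    qed
  qed
  have s1: "(\<lambda>k. Ifr v (g k) t) sums Ifr v G t" unfolding sums_def using lim .
  have s2: "(\<lambda>k. Tm lam nu n (Suc k) t) sums (Q lam nu n t - Tm lam nu n 0 t)"
  proof -
    have "(\<lambda>k. Tm lam nu n k t) sums Q lam nu n t"
      using Q_summable[OF t, of lam n] unfolding Q_def by (rule summable_sums)
    then show ?thesis by (subst sums_Suc_iff) simp
  qed
  have "(\<lambda>k. Tm lam nu n (Suc k) t) = (\<lambda>k. Ifr v (g k) t)"
    unfolding n_def v_def g_def by (intro ext Tm_rec[OF nupos t])
  then have "Q lam nu n t - Tm lam nu n 0 t = Ifr v G t" using s1 s2 sums_unique2 by metis
  then show ?thesis unfolding n_def v_def G_def by simp
qed

lemma Q_at0: "m \<ge> 1 \<Longrightarrow> Q lam nu m 0 = (if m = 1 then 1 else 0)"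
proof -
  assume m: "m \<ge> 1"
  then obtain m' where m': "m = Suc m'" by (cases m) auto
  have "Q lam nu m 0 = Tm lam nu m 0 0"
    using Q_volterra[of 0 lam m'] m' by (simp add: Ifr_def)
  then show ?thesis using Tm_0_val[OF m] by simp
qed

end

lemma ode_volterra:
  fixes f g :: "real \<Rightarrow> real" and t :: real
  assumes fcont: "continuous_on {0..} f" and fdiff: "\<And>s. s > 0 \<Longrightarrow> f differentiable (at s)"
    and d: "\<And>s. s > 0 \<Longrightarrow> deriv f s = g s" and t: "t > 0"
  shows "integral {0..t} (\<lambda>s. (t - s) powr (1 - 1) * g s) = f t - f 0"
proof -
  have "(deriv f has_integral f t - f 0) {0..t}"
  proof (rule fundamental_theorem_of_calculus_interior)
    show "continuous_on {0..t} f" by (rule continuous_on_subset[OF fcont]) auto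
    fix x assume x: "x \<in> {0<..<t}"
    then show "(f has_vector_derivative deriv f x) (at x)"
      using fdiff[of x] by (auto simp: DERIV_deriv_iff_real_differentiable has_real_derivative_iff_has_vector_derivative[symmetric])
  qed (use t in auto)
  then have "((\<lambda>s. (t - s) powr (1 - 1) * g s) has_integral f t - f 0) {0..t}"
    by (rule has_integral_spike_finite[where S = "{0, t}", rotated 2]) (auto simp: d)
  then show ?thesis by (rule integral_unique)
qed

lemma Lambda_small: "k + 1 < n \<Longrightarrow> Lambda_set n k = {}"
proof (rule ccontr)
  assume kn: "k + 1 < n" and "Lambda_set n k \<noteq> {}"
  then obtain ks where ks: "ks \<in> Lambda_set n k" by auto
  then have l: "length ks = n" and s: "sum_list ks = k" and C: "\<forall>j\<in>{2..n}. ks ! (j - 1) \<ge> 1"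
    by (simp_all add: Lambda_set_def)
  have "(\<Sum>j=2..n. (1::nat)) \<le> (\<Sum>j=2..n. ks ! (j - 1))" using C by (intro sum_mono) auto
  also have "\<dots> \<le> (\<Sum>j=1..n. ks ! (j - 1))" by (intro sum_mono2) auto
  also have "\<dots> = k" using sum_nth1[OF l] s by simp
  finally have "n - 1 \<le> k" by simp
  then show False using kn by simp
qed

lemma cont_all_R: "continuous_on {0..} f \<Longrightarrow> R \<ge> 0 \<Longrightarrow> continuous_on {0..R} f"
  by (rule continuous_on_subset) auto

theorem main_thm:
  fixes lam :: real and nu :: "nat \<Rightarrow> real" and p :: "nat \<Rightarrow> real \<Rightarrow> real"
  assumes lam_pos: "lam > 0"
    and nu_range: "\<And>n. n \<ge> 1 \<Longrightarrow> 0 < nu n \<and> nu n \<le> 1"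
    and reg: "\<And>n. n \<ge> 1 \<Longrightarrow> caputo_regular (nu n) (p n)"
    and eq: "\<And>n t. n \<ge> 1 \<Longrightarrow> t > 0 \<Longrightarrow>
               caputo (nu n) (p n) t = - lam * real n * p n t + lam * real (n - 1) * p (n - 1) t"
    and p0: "\<And>t. p 0 t = 0"
    and init1: "p 1 0 = 1"
    and init: "\<And>n. n \<ge> 2 \<Longrightarrow> p n 0 = 0"
  shows "\<forall>t\<ge>0. p n t = Q lam nu n t"
proof -
  interpret nuloc nu by unfold_locales (rule nu_range)
  have pc: "continuous_on {0..} (p n)" for n
  proof (cases "n \<ge> 1")
    case True then show ?thesis using reg[OF True] by (simp add: caputo_regular_def)
  next
    case False
    then have "n = 0" by simp
    then have "p n = (\<lambda>_. 0)" using p0 by (simp add: fun_eq_iff)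
    then show ?thesis by simp
  qed
  define gp where "gp = (\<lambda>n s. - lam * real n * p n s + lam * real (n - 1) * p (n - 1) s)"
  have gpc: "continuous_on {0..} (gp n)" for n unfolding gp_def by (intro continuous_intros pc)
  have pvol: "p n t = p n 0 + Ifr (nu n) (gp n) t" if n: "n \<ge> 1" and t: "t \<ge> 0" for n t
  proof (cases "t = 0")
    case True then show ?thesis by (simp add: Ifr_def)
  next
    case False
    then have t: "t > 0" using t by simp
    have R: "continuous_on {0..} (p n)" "\<And>s. s > 0 \<Longrightarrow> p n differentiable (at s)"
      "nu n < 1 \<Longrightarrow> (\<forall>s>0. (\<lambda>x. (s - x) powr (- nu n) * deriv (p n) x) absolutely_integrable_on {0..s})"
      using reg[OF n] by (auto simp: caputo_regular_def)
    have vn: "0 < nu n" "nu n \<le> 1" using nu_range[OF n] by auto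
    show ?thesis
    proof (cases "nu n = 1")
      case True
      have "integral {0..t} (\<lambda>s. (t - s) powr (1 - 1) * gp n s) = p n t - p n 0"
      proof (rule ode_volterra[OF R(1) R(2) _ t])
        fix s :: real assume s: "s > 0"
        show "deriv (p n) s = gp n s" using eq[OF n s] True by (simp add: caputo_def gp_def)
      qed
      then show ?thesis using True by (simp add: Ifr_def)
    next
      case False
      then have v1: "nu n < 1" using vn by simp
      have G: "Gamma (1 - nu n) > 0" using v1 by simp
      have "integral {0..t} (\<lambda>s. (t - s) powr (nu n - 1) * gp n s) = Gamma (nu n) * (p n t - p n 0)"
      proof (rule caputo_volterra[OF vn(1) v1 R(1) R(2) _ gpc _ t])
        fix s :: real assume s: "s > 0"
        show "(\<lambda>x. (s - x) powr (- nu n) * deriv (p n) x) absolutely_integrable_on {0..s}"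
          using R(3)[OF v1] s by auto
        have "caputo (nu n) (p n) s = gp n s" using eq[OF n s] by (simp add: gp_def)
        then have "1 / Gamma (1 - nu n) * integral {0..s} (\<lambda>x. (s - x) powr (- nu n) * deriv (p n) x) = gp n s"
          using False by (simp add: caputo_def)
        then show "integral {0..s} (\<lambda>x. (s - x) powr (- nu n) * deriv (p n) x) = Gamma (1 - nu n) * gp n s"
          using G by (simp add: field_simps)
      qed
      moreover have "Gamma (nu n) > 0" using vn by simp
      ultimately show ?thesis by (simp add: Ifr_def)
    qed
  qed
  have "\<forall>t\<ge>0. p n t = Q lam nu n t"
  proof (induction n)
    case 0 then show ?case by (simp add: p0 Q_zero_n)
  next
    case (Suc m)
    define v where "v = nu (Suc m)"
    have v: "v > 0" using nupos by (simp add: v_def)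
    define d where "d = (\<lambda>s. p (Suc m) s - Q lam nu (Suc m) s)"
    define gQ where "gQ = (\<lambda>s. - lam * real (Suc m) * Q lam nu (Suc m) s + lam * real m * Q lam nu m s)"
    have dc: "continuous_on {0..R} d" if "R \<ge> 0" for R
      unfolding d_def using that by (intro continuous_intros Q_cont cont_all_R[OF pc])
    have p0eq: "p (Suc m) 0 = Tm lam nu (Suc m) 0 s" for s
    proof -
      have "Tm lam nu (Suc m) 0 s = Tm lam nu (Suc m) 0 0" by (rule Tm_0_const)
      also have "\<dots> = (if Suc m = 1 then 1 else 0)" by (rule Tm_0_val) simp
      finally show ?thesis using init1 init[of "Suc m"] by (cases "m = 0") auto
    qed
    have deq: "d s = (- lam * real (Suc m) / Gamma v) * integral {0..s} (\<lambda>x. (s - x) powr (v - 1) * d x)"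
      if s: "s \<ge> 0" for s
    proof -
      have gQc: "continuous_on {0..s} gQ" unfolding gQ_def by (intro continuous_intros Q_cont s)
      have gpc': "continuous_on {0..s} (gp (Suc m))" by (rule cont_all_R[OF gpc s])
      have "d s = Ifr v (gp (Suc m)) s - Ifr v gQ s"
        unfolding d_def using pvol[of "Suc m" s] Q_volterra[OF s, of lam m] p0eq[of s] s
        by (simp add: v_def gQ_def)
      also have "\<dots> = Ifr v (\<lambda>x. gp (Suc m) x - gQ x) s" by (rule Ifr_diff[OF v s gpc' gQc, symmetric])
      also have "\<dots> = Ifr v (\<lambda>x. (- lam * real (Suc m)) * d x) s"
        unfolding Ifr_def
      proof (intro arg_cong[where f = "\<lambda>x. x / Gamma v"] integral_cong)
        fix x assume x: "x \<in> {0..s}"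
        have "p m x = Q lam nu m x" using Suc.IH x by auto
        then show "(s - x) powr (v - 1) * (gp (Suc m) x - gQ x) = (s - x) powr (v - 1) * (- lam * real (Suc m) * d x)"
          by (simp add: gp_def gQ_def d_def algebra_simps)
      qed
      also have "\<dots> = (- lam * real (Suc m) / Gamma v) * integral {0..s} (\<lambda>x. (s - x) powr (v - 1) * d x)"
        unfolding Ifr_def
      proof -
        have "(\<lambda>x. (s - x) powr (v - 1) * (- lam * real (Suc m) * d x)) = (\<lambda>x. (- lam * real (Suc m)) * ((s - x) powr (v - 1) * d x))"
          by (simp add: algebra_simps)
        then show "integral {0..s} (\<lambda>x. (s - x) powr (v - 1) * (- lam * real (Suc m) * d x)) / Gamma v =
            - lam * real (Suc m) / Gamma v * integral {0..s} (\<lambda>x. (s - x) powr (v - 1) * d x)" by simp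
      qed
      finally show ?thesis .
    qed
    have "d s = 0" if "s \<ge> 0" for s by (rule volterra_unique[OF v dc deq that])
    then show ?case by (auto simp: d_def)
  qed
  then show ?thesis .
qed

theorem corollary5p4:
  fixes lam :: real and nu :: "nat \<Rightarrow> real" and p :: "nat \<Rightarrow> real \<Rightarrow> real"
  assumes lam_pos: "lam > 0"
    and nu_range: "\<And>n. n \<ge> 1 \<Longrightarrow> 0 < nu n \<and> nu n \<le> 1"
    and reg: "\<And>n. n \<ge> 1 \<Longrightarrow> caputo_regular (nu n) (p n)"
    and eq: "\<And>n t. n \<ge> 1 \<Longrightarrow> t > 0 \<Longrightarrow>
               caputo (nu n) (p n) t = - lam * real n * p n t + lam * real (n - 1) * p (n - 1) t"
    and p0: "\<And>t. p 0 t = 0"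
    and init1: "p 1 0 = 1"
    and init: "\<And>n. n \<ge> 2 \<Longrightarrow> p n 0 = 0"
    and n_pos: "n \<ge> 1"
    and t_pos: "t > 0"
  shows "(\<lambda>i. let k = i + (n - 1) in
            ((-1) ^ (n - 1) / real n) * (- lam) ^ k *
            (\<Sum>ks\<in>Lambda_set n k.
               t powr (\<Sum>j=1..n. real (ks ! (j - 1)) * nu j) *
               (\<Prod>j=1..n. real j ^ (ks ! (j - 1))) /
               Gamma (1 + (\<Sum>j=1..n. real (ks ! (j - 1)) * nu j))))
         sums p n t"
proof -
  interpret nuloc nu by unfold_locales (rule nu_range)
  have pQ: "p n t = Q lam nu n t"
    using main_thm[OF lam_pos nu_range reg eq p0 init1 init] t_pos by auto
  have s: "(\<lambda>k. Tm lam nu n k t) sums Q lam nu n t"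
    using Q_summable[of t lam n] t_pos unfolding Q_def by (simp add: summable_sums)
  have z: "(\<Sum>i<n - 1. Tm lam nu n i t) = 0"
  proof (rule sum.neutral, rule ballI)
    fix i assume "i \<in> {..<n - 1}"
    then have "i + 1 < n" by auto
    then show "Tm lam nu n i t = 0" by (simp add: Tm_def Lambda_small)
  qed
  have sh: "(\<lambda>i. Tm lam nu n (i + (n - 1)) t) sums Q lam nu n t"
    using s z sums_iff_shift[of "\<lambda>k. Tm lam nu n k t" "n - 1" "Q lam nu n t"] by simp
  have e: "(\<lambda>i. let k = i + (n - 1) in
            ((-1) ^ (n - 1) / real n) * (- lam) ^ k *
            (\<Sum>ks\<in>Lambda_set n k.
               t powr (\<Sum>j=1..n. real (ks ! (j - 1)) * nu j) *
               (\<Prod>j=1..n. real j ^ (ks ! (j - 1))) /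
               Gamma (1 + (\<Sum>j=1..n. real (ks ! (j - 1)) * nu j)))) =
        (\<lambda>i. Tm lam nu n (i + (n - 1)) t)"
  proof
    fix i
    show "(let k = i + (n - 1) in
            ((-1) ^ (n - 1) / real n) * (- lam) ^ k *
            (\<Sum>ks\<in>Lambda_set n k.
               t powr (\<Sum>j=1..n. real (ks ! (j - 1)) * nu j) *
               (\<Prod>j=1..n. real j ^ (ks ! (j - 1))) /
               Gamma (1 + (\<Sum>j=1..n. real (ks ! (j - 1)) * nu j)))) =
        Tm lam nu n (i + (n - 1)) t"
      unfolding Let_def Tm_def
    proof (intro arg_cong[where f = "\<lambda>x. _ * x"] sum.cong refl)
      fix ks
      show "t powr (\<Sum>j=1..n. real (ks ! (j - 1)) * nu j) * (\<Prod>j=1..n. real j ^ (ks ! (j - 1))) /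
               Gamma (1 + (\<Sum>j=1..n. real (ks ! (j - 1)) * nu j)) = Pw n ks * phi (Ew nu n ks) t"
        using t_pos by (simp add: Pw_def Ew_def phi_def)
    qed
  qed
  show ?thesis unfolding e pQ by (rule sh)
qed

end
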